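(* Let $G$ be the cube graph $Q_3$. Then $B_3(G)=5$.
   Context: Fix a set $\Sigma$ of symbols (bond-edge types) and a disjoint copy $\hat\Sigma=\{\hat a:a\in\Sigma\}$ with $\hat{\hat a}=a$; elements of $\Sigma\cup\hat\Sigma$ are cohesive-end types. A tile is a finite multiset of cohesive-end types. A pot is a finite set $P$ of tiles such that whenever $x$ occurs in a tile of $P$, $\hat x$ occurs in some tile of $P$; $\Sigma(P)$ is the set of $a\in\Sigma$ such that $a$ or $\hat a$ occurs in a tile of $P$. Graphs are finite, loops and multiple edges allowed. An assembly design of a graph $H$ labels the half-edges of $H$ by cohesive-end types so that the two half-edges of each edge receive complementary labels $x,\hat x$; $t_v$ is the multiset of labels at $v$, $P_\lambda(H)=\{t_v\}$, and $P$ realizes $H$ ($H\in\mathcal{O}(P)$) if some assembly design $\lambda$ has $P_\lambda(H)\subseteq P$. $P$ realizes $G$ according to Scenario 3 if $G\in\mathcal{O}(P)$, every $H\in\mathcal{O}(P)$ has $\#V(H)\ge\#V(G)$, and every $H\in\mathcal{O}(P)$ with $\#V(H)=\#V(G)$ is isomorphic to $G$. $B_3(G)=\min\{\#\Sigma(P): P \text{ realizes } G \text{ according to Scenario 3}\}$. *)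

theory Defs
  imports Main "HOL-Library.Multiset"
begin

(* Cohesive-end types over the symbol set Sigma = nat: Unh a = a, Hat a = \<hat>a *)
datatype cet = Unh nat | Hat nat

fun hatc :: "cet \<Rightarrow> cet" where
  "hatc (Unh a) = Hat a"
| "hatc (Hat a) = Unh a"

type_synonym tile = "cet multiset"

definition is_pot :: "tile set \<Rightarrow> bool" where
  "is_pot P \<longleftrightarrow> finite P \<and> (\<forall>t\<in>P. \<forall>x. x \<in># t \<longrightarrow> (\<exists>t'\<in>P. hatc x \<in># t'))"

definition sigma_of :: "tile set \<Rightarrow> nat set" where
  "sigma_of P = {a. \<exists>t\<in>P. Unh a \<in># t \<or> Hat a \<in># t}"

(* Finite multigraphs (loops and multiple edges allowed): each edge e has two
   half-edges (e,True), (e,False) with endpoints endp e True, endp e False. *)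
record graph =
  verts :: "nat set"
  edges :: "nat set"
  endp  :: "nat \<Rightarrow> bool \<Rightarrow> nat"

definition wf_graph :: "graph \<Rightarrow> bool" where
  "wf_graph H \<longleftrightarrow> finite (verts H) \<and> finite (edges H) \<and> verts H \<noteq> {} \<and>
     (\<forall>e\<in>edges H. \<forall>b. endp H e b \<in> verts H)"

definition assembly_design :: "graph \<Rightarrow> (nat \<Rightarrow> bool \<Rightarrow> cet) \<Rightarrow> bool" where
  "assembly_design H lam \<longleftrightarrow> (\<forall>e\<in>edges H. lam e False = hatc (lam e True))"

definition tile_at :: "graph \<Rightarrow> (nat \<Rightarrow> bool \<Rightarrow> cet) \<Rightarrow> nat \<Rightarrow> tile" where
  "tile_at H lam v = (\<Sum>e\<in>edges H.
      (if endp H e True = v then {#lam e True#} else {#}) +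
      (if endp H e False = v then {#lam e False#} else {#}))"

definition pot_of_design :: "graph \<Rightarrow> (nat \<Rightarrow> bool \<Rightarrow> cet) \<Rightarrow> tile set" where
  "pot_of_design H lam = tile_at H lam ` verts H"

definition realizes :: "tile set \<Rightarrow> graph \<Rightarrow> bool" where
  "realizes P H \<longleftrightarrow> (\<exists>lam. assembly_design H lam \<and> pot_of_design H lam \<subseteq> P)"

definition graph_iso :: "graph \<Rightarrow> graph \<Rightarrow> bool" where
  "graph_iso G H \<longleftrightarrow> (\<exists>f g. bij_betw f (verts G) (verts H) \<and> bij_betw g (edges G) (edges H) \<and>
     (\<forall>e\<in>edges G. {endp H (g e) True, endp H (g e) False} =
                   f ` {endp G e True, endp G e False}))"

definition realizes_scen3 :: "tile set \<Rightarrow> graph \<Rightarrow> bool" where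
  "realizes_scen3 P G \<longleftrightarrow> is_pot P \<and> realizes P G \<and>
     (\<forall>H. wf_graph H \<and> realizes P H \<longrightarrow> card (verts H) \<ge> card (verts G)) \<and>
     (\<forall>H. wf_graph H \<and> realizes P H \<and> card (verts H) = card (verts G) \<longrightarrow> graph_iso H G)"

(* The cube graph Q_3: vertices 0..7, edges join numbers differing in one bit *)
definition q3_edge_list :: "(nat \<times> nat) list" where
  "q3_edge_list = [(0,1),(2,3),(4,5),(6,7),(0,2),(1,3),(4,6),(5,7),(0,4),(1,5),(2,6),(3,7)]"

definition Q3 :: graph where
  "Q3 = \<lparr> verts = {0..<8}, edges = {0..<12},
          endp = (\<lambda>e b. if e < 12 then (if b then fst (q3_edge_list ! e) else snd (q3_edge_list ! e)) else 0) \<rparr>"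

end

theory Submission
  imports Defs
begin


definition HE :: "graph \<Rightarrow> nat \<Rightarrow> (nat \<times> bool) set" where
  "HE H v = {(e,b). e \<in> edges H \<and> endp H e b = v}"

lemma sum_image_aux:
  fixes endp :: "nat \<Rightarrow> bool \<Rightarrow> nat" and lam :: "nat \<Rightarrow> bool \<Rightarrow> cet"
  assumes "finite E"
  shows "(\<Sum>e\<in>E. (if endp e True = v then {#lam e True#} else {#}) + (if endp e False = v then {#lam e False#} else {#}))
    = image_mset (\<lambda>(e,b). lam e b) (mset_set {(e,b). e \<in> E \<and> endp e b = v})"
  using assms
proof (induction E rule: finite_induct)
  case empty then show ?case by simp
next
  case (insert e F)
  have split: "{(e',b). e' \<in> insert e F \<and> endp e' b = v} = {(e',b). e' = e \<and> endp e' b = v} \<union> {(e',b). e' \<in> F \<and> endp e' b = v}" by auto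
  have fin1: "finite {(e',b). e' = e \<and> endp e' b = v}"
    by (rule finite_subset[of _ "{e} \<times> UNIV"]) auto
  have fin2: "finite {(e',b). e' \<in> F \<and> endp e' b = v}"
    by (rule finite_subset[of _ "F \<times> UNIV"]) (use insert.hyps(1) in auto)
  have disj: "{(e',b). e' = e \<and> endp e' b = v} \<inter> {(e',b). e' \<in> F \<and> endp e' b = v} = {}"
    using insert.hyps(2) by auto
  have seteq: "{(e',b). e' = e \<and> endp e' b = v} = (if endp e True = v then {(e,True)} else {}) \<union> (if endp e False = v then {(e,False)} else {})"
    by (auto; metis (full_types))
  have one: "image_mset (\<lambda>(e,b). lam e b) (mset_set {(e',b). e' = e \<and> endp e' b = v}) = (if endp e True = v then {#lam e True#} else {#}) + (if endp e False = v then {#lam e False#} else {#})"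
    unfolding seteq by (cases "endp e True = v"; cases "endp e False = v") auto
  have A: "image_mset (\<lambda>(e,b). lam e b) (mset_set {(e',b). e' \<in> insert e F \<and> endp e' b = v}) = image_mset (\<lambda>(e,b). lam e b) (mset_set {(e',b). e' = e \<and> endp e' b = v}) + image_mset (\<lambda>(e,b). lam e b) (mset_set {(e',b). e' \<in> F \<and> endp e' b = v})"
    unfolding split mset_set_Union[OF fin1 fin2 disj] by simp
  show ?case unfolding A one insert.IH[symmetric] using insert.hyps by simp
qed

lemma tile_at_image:
  assumes "finite (edges H)"
  shows "tile_at H lam v = image_mset (\<lambda>(e,b). lam e b) (mset_set (HE H v))"
  unfolding tile_at_def HE_def using sum_image_aux[OF assms, of "endp H" v lam] by simp

lemma finite_HE: "finite (edges H) \<Longrightarrow> finite (HE H v)"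
  unfolding HE_def by (rule finite_subset[of _ "edges H \<times> UNIV"]) auto

lemma tile_mem:
  assumes "finite (edges H)" "e \<in> edges H" "endp H e b = v"
  shows "lam e b \<in># tile_at H lam v"
proof -
  have "(e,b) \<in> HE H v" using assms unfolding HE_def by auto
  then show ?thesis unfolding tile_at_image[OF assms(1)]
    using finite_HE[OF assms(1)] by (force)
qed

lemma tile_two:
  assumes "finite (edges H)" "e \<in> edges H" "endp H e b = v" "e' \<in> edges H" "endp H e' b' = v" "(e,b) \<noteq> (e',b')"
  shows "{#lam e b, lam e' b'#} \<subseteq># tile_at H lam v"
proof -
  have sub: "{(e,b),(e',b')} \<subseteq> HE H v" using assms unfolding HE_def by auto
  have "mset_set {(e,b),(e',b')} \<subseteq># mset_set (HE H v)"
    by (rule subset_imp_msubset_mset_set[OF sub finite_HE[OF assms(1)]])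
  then have "image_mset (\<lambda>(e,b). lam e b) (mset_set {(e,b),(e',b')}) \<subseteq># image_mset (\<lambda>(e,b). lam e b) (mset_set (HE H v))"
    by (rule image_mset_subseteq_mono)
  then show ?thesis unfolding tile_at_image[OF assms(1)] using assms(6) by simp
qed

lemma tile_ex:
  assumes "finite (edges H)" "x \<in># tile_at H lam v"
  shows "\<exists>e b. e \<in> edges H \<and> endp H e b = v \<and> lam e b = x"
  using assms(2) unfolding tile_at_image[OF assms(1)] HE_def
  using finite_HE[OF assms(1), unfolded HE_def] by auto

lemma tile_sum:
  assumes "wf_graph H"
  shows "(\<Sum>v\<in>verts H. tile_at H lam v) = (\<Sum>e\<in>edges H. {#lam e True, lam e False#})"
proof -
  have fin: "finite (verts H)" using assms unfolding wf_graph_def by auto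
  have "(\<Sum>v\<in>verts H. tile_at H lam v) = (\<Sum>e\<in>edges H. \<Sum>v\<in>verts H.
      (if endp H e True = v then {#lam e True#} else {#}) + (if endp H e False = v then {#lam e False#} else {#}))"
    unfolding tile_at_def by (rule sum.swap)
  also have "\<dots> = (\<Sum>e\<in>edges H. {#lam e True, lam e False#})"
  proof (rule sum.cong[OF refl])
    fix e assume e: "e \<in> edges H"
    have i1: "endp H e True \<in> verts H" "endp H e False \<in> verts H" using assms e unfolding wf_graph_def by auto
    show "(\<Sum>v\<in>verts H. (if endp H e True = v then {#lam e True#} else {#}) + (if endp H e False = v then {#lam e False#} else {#})) = {#lam e True, lam e False#}"
      using i1 fin by (simp add: sum.distrib sum.delta)
  qed
  finally show ?thesis .
qed


lemma count_pair_hat: "count {#y, hatc y#} (Unh a) = count {#y, hatc y#} (Hat a)"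
  by (cases y) auto

lemma balance:
  assumes "wf_graph H" "assembly_design H lam"
  shows "(\<Sum>v\<in>verts H. count (tile_at H lam v) (Unh a)) = (\<Sum>v\<in>verts H. count (tile_at H lam v) (Hat a))"
proof -
  have "\<And>x. (\<Sum>v\<in>verts H. count (tile_at H lam v) x) = (\<Sum>e\<in>edges H. count {#lam e True, hatc (lam e True)#} x)"
  proof -
    fix x
    have "(\<Sum>v\<in>verts H. count (tile_at H lam v) x) = count (\<Sum>v\<in>verts H. tile_at H lam v) x"
      by (simp add: count_sum)
    also have "\<dots> = count (\<Sum>e\<in>edges H. {#lam e True, lam e False#}) x" using tile_sum[OF assms(1)] by simp
    also have "\<dots> = (\<Sum>e\<in>edges H. count {#lam e True, lam e False#} x)" by (simp add: count_sum)
    also have "\<dots> = (\<Sum>e\<in>edges H. count {#lam e True, hatc (lam e True)#} x)"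
      using assms(2) unfolding assembly_design_def by (intro sum.cong) auto
    finally show "(\<Sum>v\<in>verts H. count (tile_at H lam v) x) = (\<Sum>e\<in>edges H. count {#lam e True, hatc (lam e True)#} x)" .
  qed
  then show ?thesis using count_pair_hat by simp
qed

lemma size_sum:
  assumes "wf_graph H"
  shows "(\<Sum>v\<in>verts H. size (tile_at H lam v)) = 2 * card (edges H)"
proof -
  have "(\<Sum>v\<in>verts H. size (tile_at H lam v)) = size (\<Sum>v\<in>verts H. tile_at H lam v)"
    by (simp add: size_multiset_sum)
  also have "\<dots> = size (\<Sum>e\<in>edges H. {#lam e True, lam e False#})" using tile_sum[OF assms] by simp
  also have "\<dots> = 2 * card (edges H)" by (simp add: size_multiset_sum)
  finally show ?thesis .
qed

lemma realizes_iff: "realizes P H \<longleftrightarrow> (\<exists>lam. assembly_design H lam \<and> (\<forall>v\<in>verts H. tile_at H lam v \<in> P))"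
  unfolding realizes_def pot_of_design_def by auto

definition goodg :: "graph \<Rightarrow> bool" where
  "goodg H \<longleftrightarrow> (\<forall>e\<in>edges H. endp H e True \<noteq> endp H e False) \<and>
    (\<forall>e\<in>edges H. \<forall>e'\<in>edges H. {endp H e True, endp H e False} = {endp H e' True, endp H e' False} \<longrightarrow> e = e') \<and>
    (\<exists>c. \<forall>e\<in>edges H. c (endp H e True) \<noteq> (c (endp H e False) :: bool))"

lemma upt12: "{0..<12::nat} = {0,1,2,3,4,5,6,7,8,9,10,11}"
  by (simp add: atLeast0LessThan lessThan_Suc eval_nat_numeral insert_commute)
lemma upt8: "{0..<8::nat} = {0,1,2,3,4,5,6,7}"
  by (simp add: atLeast0LessThan lessThan_Suc eval_nat_numeral insert_commute)

lemma Q3_simps: "verts Q3 = {0..<8}" "edges Q3 = {0..<12}" by (simp_all add: Q3_def)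

definition qc :: "nat \<Rightarrow> bool" where "qc v \<longleftrightarrow> v \<in> {1,2,4,7}"

lemma Q3_loopfree: "i \<in> {0..<12} \<Longrightarrow> endp Q3 i True \<noteq> endp Q3 i False"
  unfolding upt12 by (auto simp: Q3_def q3_edge_list_def)
lemma Q3_bip: "i \<in> {0..<12} \<Longrightarrow> qc (endp Q3 i True) \<noteq> qc (endp Q3 i False)"
  unfolding upt12 by (auto simp: Q3_def q3_edge_list_def qc_def)
definition q3idx :: "nat \<Rightarrow> nat \<Rightarrow> nat" where
  "q3idx a b = (if (a,b) = (0,1) then 0 else if (a,b) = (2,3) then 1 else if (a,b) = (4,5) then 2 else if (a,b) = (6,7) then 3 else if (a,b) = (0,2) then 4 else if (a,b) = (1,3) then 5 else if (a,b) = (4,6) then 6 else if (a,b) = (5,7) then 7 else if (a,b) = (0,4) then 8 else if (a,b) = (1,5) then 9 else if (a,b) = (2,6) then 10 else if (a,b) = (3,7) then 11 else 0)"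

lemma Q3_lt: "i \<in> {0..<12} \<Longrightarrow> endp Q3 i True < endp Q3 i False"
  unfolding upt12 by (auto simp: Q3_def q3_edge_list_def)
lemma Q3_idx: "i \<in> {0..<12} \<Longrightarrow> q3idx (endp Q3 i True) (endp Q3 i False) = i"
  unfolding upt12 by (auto simp: Q3_def q3_edge_list_def q3idx_def)
lemma Q3_simple: "i \<in> {0..<12} \<Longrightarrow> j \<in> {0..<12} \<Longrightarrow> {endp Q3 i True, endp Q3 i False} = {endp Q3 j True, endp Q3 j False} \<Longrightarrow> i = j"
proof -
  assume i: "i \<in> {0..<12}" and j: "j \<in> {0..<12}" and eq: "{endp Q3 i True, endp Q3 i False} = {endp Q3 j True, endp Q3 j False}"
  have "endp Q3 i True = endp Q3 j True \<and> endp Q3 i False = endp Q3 j False"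
    using eq Q3_lt[OF i] Q3_lt[OF j] by (auto simp: doubleton_eq_iff)
  then show "i = j" using Q3_idx[OF i] Q3_idx[OF j] by metis
qed
lemma Q3_endp: "i \<in> {0..<12} \<Longrightarrow> endp Q3 i b \<in> {0..<8}"
  unfolding upt12 by (cases b) (auto simp: Q3_def q3_edge_list_def)

lemma iso_good:
  assumes wf: "wf_graph H" and iso: "graph_iso H Q3"
  shows "goodg H"
proof -
  obtain f g where f: "bij_betw f (verts H) {0..<8}" and g: "bij_betw g (edges H) {0..<12}"
    and fg: "\<forall>e\<in>edges H. {endp Q3 (g e) True, endp Q3 (g e) False} = f ` {endp H e True, endp H e False}"
    using iso unfolding graph_iso_def Q3_simps by blast
  have fg': "e \<in> edges H \<Longrightarrow> {endp Q3 (g e) True, endp Q3 (g e) False} = {f (endp H e True), f (endp H e False)}" for e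
    using fg by simp
  have ge: "e \<in> edges H \<Longrightarrow> g e \<in> {0..<12}" for e using g bij_betwE by blast
  have ginj: "inj_on g (edges H)" using g bij_betw_def by blast
  have L: "\<forall>e\<in>edges H. endp H e True \<noteq> endp H e False"
  proof
    fix e assume e: "e \<in> edges H"
    show "endp H e True \<noteq> endp H e False"
    proof
      assume eq: "endp H e True = endp H e False"
      have "{endp Q3 (g e) True, endp Q3 (g e) False} = {f (endp H e True)}" using fg'[OF e] eq by simp
      then have "endp Q3 (g e) True = endp Q3 (g e) False" by (simp add: doubleton_eq_iff)
      then show False using Q3_loopfree[OF ge[OF e]] by simp
    qed
  qed
  have S: "\<forall>e\<in>edges H. \<forall>e'\<in>edges H. {endp H e True, endp H e False} = {endp H e' True, endp H e' False} \<longrightarrow> e = e'"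
  proof (intro ballI impI)
    fix e e' assume e: "e \<in> edges H" and e': "e' \<in> edges H" and eq: "{endp H e True, endp H e False} = {endp H e' True, endp H e' False}"
    have "{endp Q3 (g e) True, endp Q3 (g e) False} = {endp Q3 (g e') True, endp Q3 (g e') False}"
      using fg[rule_format, OF e] fg[rule_format, OF e'] eq by simp
    then have "g e = g e'" using Q3_simple[OF ge[OF e] ge[OF e']] by simp
    then show "e = e'" using ginj e e' unfolding inj_on_def by blast
  qed
  have B: "\<forall>e\<in>edges H. qc (f (endp H e True)) \<noteq> qc (f (endp H e False))"
  proof
    fix e assume e: "e \<in> edges H"
    have X: "{endp Q3 (g e) True, endp Q3 (g e) False} = {f (endp H e True), f (endp H e False)}" using fg'[OF e] .
    have Y: "qc (endp Q3 (g e) True) \<noteq> qc (endp Q3 (g e) False)" using Q3_bip[OF ge[OF e]] .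
    show "qc (f (endp H e True)) \<noteq> qc (f (endp H e False))"
    proof (cases "f (endp H e True) = endp Q3 (g e) True")
      case True
      then have "f (endp H e False) = endp Q3 (g e) False" using X Y by (auto simp: doubleton_eq_iff)
      then show ?thesis using True Y by simp
    next
      case False
      then have "f (endp H e True) = endp Q3 (g e) False" "f (endp H e False) = endp Q3 (g e) True"
        using X by (auto simp: doubleton_eq_iff)
      then show ?thesis using Y by simp
    qed
  qed
  have C: "\<exists>c. \<forall>e\<in>edges H. c (endp H e True) \<noteq> (c (endp H e False) :: bool)"
    using B by (intro exI[of _ "\<lambda>v. qc (f v)"]) simp
  show ?thesis unfolding goodg_def using L S C by blast
qed


definition sw :: "nat \<times> bool \<Rightarrow> nat \<times> bool \<Rightarrow> nat \<times> bool \<Rightarrow> nat \<times> bool" where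
  "sw h1 h2 h = (if h = h1 then h2 else if h = h2 then h1 else h)"

definition swapG :: "nat \<times> bool \<Rightarrow> nat \<times> bool \<Rightarrow> graph" where
  "swapG h1 h2 = Q3\<lparr>endp := (\<lambda>e b. case sw h1 h2 (e,b) of (e',b') \<Rightarrow> endp Q3 e' b')\<rparr>"

lemma sw_inv: "sw h1 h2 (sw h1 h2 h) = h" unfolding sw_def by auto

lemma swap_tile:
  assumes h1: "fst h1 \<in> {0..<12}" and h2: "fst h2 \<in> {0..<12}"
    and lab: "lam (fst h1) (snd h1) = lam (fst h2) (snd h2)"
  shows "tile_at (swapG h1 h2) lam v = tile_at Q3 lam v"
proof -
  have fin: "finite (edges (swapG h1 h2))" "finite (edges Q3)" by (simp_all add: swapG_def Q3_def)
  have fst_sw: "fst (sw h1 h2 x) \<in> {0..<12} \<longleftrightarrow> fst x \<in> {0..<12}" for x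
    using h1 h2 unfolding sw_def by auto
  have HEeq: "HE (swapG h1 h2) v = sw h1 h2 ` HE Q3 v"
  proof (rule set_eqI)
    fix x
    have A: "x \<in> sw h1 h2 ` HE Q3 v \<longleftrightarrow> sw h1 h2 x \<in> HE Q3 v"
    proof
      assume "x \<in> sw h1 h2 ` HE Q3 v"
      then obtain y where y: "y \<in> HE Q3 v" "x = sw h1 h2 y" by blast
      then show "sw h1 h2 x \<in> HE Q3 v" by (simp add: sw_inv)
    next
      assume "sw h1 h2 x \<in> HE Q3 v"
      then show "x \<in> sw h1 h2 ` HE Q3 v"
        by (rule image_eqI[where x="sw h1 h2 x", rotated]) (simp add: sw_inv)
    qed
    obtain e b where x: "x = (e,b)" by fastforce
    obtain e' b' where y: "sw h1 h2 x = (e',b')" by fastforce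
    have B: "x \<in> HE (swapG h1 h2) v \<longleftrightarrow> e \<in> {0..<12} \<and> endp Q3 e' b' = v"
      unfolding HE_def swapG_def using x y by (simp add: Q3_simps)
    have C: "sw h1 h2 x \<in> HE Q3 v \<longleftrightarrow> e' \<in> {0..<12} \<and> endp Q3 e' b' = v"
      unfolding HE_def using y by (simp add: Q3_simps)
    show "x \<in> HE (swapG h1 h2) v \<longleftrightarrow> x \<in> sw h1 h2 ` HE Q3 v"
      unfolding A B C using fst_sw[of x] x y by simp
  qed
  have inj: "inj_on (sw h1 h2) A" for A by (metis inj_onI sw_inv)
  have lsw: "(\<lambda>(e,b). lam e b) \<circ> sw h1 h2 = (\<lambda>(e,b). lam e b)"
    using lab unfolding sw_def by (auto simp: fun_eq_iff split: prod.splits)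
  have "tile_at (swapG h1 h2) lam v = image_mset (\<lambda>(e,b). lam e b) (mset_set (sw h1 h2 ` HE Q3 v))"
    unfolding tile_at_image[OF fin(1)] HEeq ..
  also have "\<dots> = image_mset (\<lambda>(e,b). lam e b) (image_mset (sw h1 h2) (mset_set (HE Q3 v)))"
    by (simp add: image_mset_mset_set[OF inj])
  also have "\<dots> = image_mset ((\<lambda>(e,b). lam e b) \<circ> sw h1 h2) (mset_set (HE Q3 v))"
    by (simp add: image_mset.compositionality)
  also have "\<dots> = tile_at Q3 lam v" unfolding lsw tile_at_image[OF fin(2)] ..
  finally show ?thesis .
qed

lemma swap_good:
  assumes sc: "realizes_scen3 P Q3" and des: "assembly_design Q3 lam"
    and tl: "\<forall>v\<in>{0..<8}. tile_at Q3 lam v \<in> P"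
    and i: "i \<in> {0..<12}" and j: "j \<in> {0..<12}" and lab: "lam i b = lam j b'"
  shows "goodg (swapG (i,b) (j,b'))"
proof -
  let ?H = "swapG (i,b) (j,b')"
  have ends: "(case sw (i,b) (j,b') (e,bb) of (e',b'') \<Rightarrow> endp Q3 e' b'') \<in> {0..<8}" if e: "e \<in> {0..<12}" for e bb
  proof -
    obtain e' b'' where y: "sw (i,b) (j,b') (e,bb) = (e',b'')" by fastforce
    have "e' \<in> {0..<12}" using y e i j unfolding sw_def by (auto split: if_splits)
    then show ?thesis using y Q3_endp by simp
  qed
  have wf: "wf_graph ?H"
    unfolding wf_graph_def using ends by (simp add: swapG_def Q3_simps)
  have "realizes P ?H"
    unfolding realizes_iff
  proof (intro exI conjI)
    show "assembly_design ?H lam" using des unfolding assembly_design_def swapG_def by (simp add: Q3_simps)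
    show "\<forall>v\<in>verts ?H. tile_at ?H lam v \<in> P"
      using swap_tile[of "(i,b)" "(j,b')" lam] i j lab tl by (simp add: swapG_def Q3_simps)
  qed
  moreover have "card (verts ?H) = card (verts Q3)" by (simp add: swapG_def)
  ultimately have "graph_iso ?H Q3" using sc wf unfolding realizes_scen3_def by blast
  then show ?thesis using iso_good wf by blast
qed



lemma goodgD:
  assumes "goodg H"
  shows "\<And>e. e \<in> edges H \<Longrightarrow> endp H e True \<noteq> endp H e False"
    and "\<And>e e'. e \<in> edges H \<Longrightarrow> e' \<in> edges H \<Longrightarrow> {endp H e True, endp H e False} = {endp H e' True, endp H e' False} \<Longrightarrow> e = e'"
    and "\<exists>c. \<forall>e\<in>edges H. c (endp H e True) \<noteq> (c (endp H e False) :: bool)"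
  using assms unfolding goodg_def by blast+

lemma ng_loop:
  fixes k :: nat and H :: graph
  assumes "k \<in> edges H" "endp H k True = endp H k False"
  shows "\<not> goodg H"
  using assms goodgD(1) by blast

lemma ng_multi:
  fixes k :: nat and H :: graph and l :: nat
  assumes "k \<in> edges H" "l \<in> edges H" "k \<noteq> l" "{endp H k True, endp H k False} = {endp H l True, endp H l False}"
  shows "\<not> goodg H"
  using assms goodgD(2) by blast

lemma dbl_col: "{p,q} = {a,b} \<Longrightarrow> (c::nat \<Rightarrow> bool) p \<noteq> c q \<Longrightarrow> c a \<noteq> c b"
  by (auto simp: doubleton_eq_iff)

lemma ng_odd3:
  fixes ka kb kc :: nat and H :: graph and va vb vc :: nat
  assumes "ka \<in> edges H" "kb \<in> edges H" "kc \<in> edges H"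
    "{endp H ka True, endp H ka False} = {va,vb}"
    "{endp H kb True, endp H kb False} = {vb,vc}"
    "{endp H kc True, endp H kc False} = {vc,va}"
  shows "\<not> goodg H"
proof
  assume "goodg H"
  then obtain c where c: "\<forall>e\<in>edges H. c (endp H e True) \<noteq> (c (endp H e False) :: bool)"
    using goodgD(3) by blast
  have 1: "c va \<noteq> c vb" by (rule dbl_col[OF assms(4)]) (rule c[rule_format, OF assms(1)])
  have 2: "c vb \<noteq> c vc" by (rule dbl_col[OF assms(5)]) (rule c[rule_format, OF assms(2)])
  have 3: "c vc \<noteq> c va" by (rule dbl_col[OF assms(6)]) (rule c[rule_format, OF assms(3)])
  from 1 2 3 show False by (cases "c va"; cases "c vb"; cases "c vc") simp_all
qed

lemma ng_odd5:
  fixes ka kb kc kd ke :: nat and H :: graph and va vb vc vd ve :: nat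
  assumes "ka \<in> edges H" "kb \<in> edges H" "kc \<in> edges H" "kd \<in> edges H" "ke \<in> edges H"
    "{endp H ka True, endp H ka False} = {va,vb}"
    "{endp H kb True, endp H kb False} = {vb,vc}"
    "{endp H kc True, endp H kc False} = {vc,vd}"
    "{endp H kd True, endp H kd False} = {vd,ve}"
    "{endp H ke True, endp H ke False} = {ve,va}"
  shows "\<not> goodg H"
proof
  assume "goodg H"
  then obtain c where c: "\<forall>e\<in>edges H. c (endp H e True) \<noteq> (c (endp H e False) :: bool)"
    using goodgD(3) by blast
  have 1: "c va \<noteq> c vb" by (rule dbl_col[OF assms(6)]) (rule c[rule_format, OF assms(1)])
  have 2: "c vb \<noteq> c vc" by (rule dbl_col[OF assms(7)]) (rule c[rule_format, OF assms(2)])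
  have 3: "c vc \<noteq> c vd" by (rule dbl_col[OF assms(8)]) (rule c[rule_format, OF assms(3)])
  have 4: "c vd \<noteq> c ve" by (rule dbl_col[OF assms(9)]) (rule c[rule_format, OF assms(4)])
  have 5: "c ve \<noteq> c va" by (rule dbl_col[OF assms(10)]) (rule c[rule_format, OF assms(5)])
  from 1 2 3 4 5 show False by (cases "c va"; cases "c vb"; cases "c vc"; cases "c vd"; cases "c ve") simp_all
qed

lemma ng_0_1_0: "\<not> goodg (swapG (0,True) (1,True))"
  by (rule ng_odd5[where ka=4 and kb=10 and kc=3 and kd=11 and ke=1 and va=0 and vb=2 and vc=6 and vd=7 and ve=3]) (simp_all add: swapG_def sw_def Q3_def q3_edge_list_def insert_commute)

lemma ng_0_1_1: "\<not> goodg (swapG (0,True) (1,False))"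
  by (rule ng_multi[of 0 _ 5]) (simp_all add: swapG_def sw_def Q3_def q3_edge_list_def insert_commute)

lemma ng_0_2_0: "\<not> goodg (swapG (0,True) (2,True))"
  by (rule ng_odd5[where ka=4 and kb=10 and kc=3 and kd=7 and ke=2 and va=0 and vb=2 and vc=6 and vd=7 and ve=5]) (simp_all add: swapG_def sw_def Q3_def q3_edge_list_def insert_commute)

lemma ng_0_2_1: "\<not> goodg (swapG (0,True) (2,False))"
  by (rule ng_multi[of 0 _ 9]) (simp_all add: swapG_def sw_def Q3_def q3_edge_list_def insert_commute)

lemma ng_0_4_1: "\<not> goodg (swapG (0,True) (4,False))"
  by (rule ng_loop[of 4]) (simp_all add: swapG_def sw_def Q3_def q3_edge_list_def insert_commute)

lemma ng_0_5_0: "\<not> goodg (swapG (0,True) (5,True))"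
  by (rule ng_loop[of 0]) (simp_all add: swapG_def sw_def Q3_def q3_edge_list_def insert_commute)

lemma ng_0_6_0: "\<not> goodg (swapG (0,True) (6,True))"
  by (rule ng_odd3[where ka=4 and kb=10 and kc=6 and va=0 and vb=2 and vc=6]) (simp_all add: swapG_def sw_def Q3_def q3_edge_list_def insert_commute)

lemma ng_0_6_1: "\<not> goodg (swapG (0,True) (6,False))"
  by (rule ng_multi[of 6 _ 8]) (simp_all add: swapG_def sw_def Q3_def q3_edge_list_def insert_commute)

lemma ng_0_7_0: "\<not> goodg (swapG (0,True) (7,True))"
  by (rule ng_multi[of 0 _ 9]) (simp_all add: swapG_def sw_def Q3_def q3_edge_list_def insert_commute)

lemma ng_0_7_1: "\<not> goodg (swapG (0,True) (7,False))"
  by (rule ng_odd3[where ka=8 and kb=2 and kc=7 and va=0 and vb=4 and vc=5]) (simp_all add: swapG_def sw_def Q3_def q3_edge_list_def insert_commute)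

lemma ng_0_8_1: "\<not> goodg (swapG (0,True) (8,False))"
  by (rule ng_loop[of 8]) (simp_all add: swapG_def sw_def Q3_def q3_edge_list_def insert_commute)

lemma ng_0_9_0: "\<not> goodg (swapG (0,True) (9,True))"
  by (rule ng_loop[of 0]) (simp_all add: swapG_def sw_def Q3_def q3_edge_list_def insert_commute)

lemma ng_0_10_0: "\<not> goodg (swapG (0,True) (10,True))"
  by (rule ng_odd3[where ka=8 and kb=6 and kc=10 and va=0 and vb=4 and vc=6]) (simp_all add: swapG_def sw_def Q3_def q3_edge_list_def insert_commute)

lemma ng_0_10_1: "\<not> goodg (swapG (0,True) (10,False))"
  by (rule ng_multi[of 4 _ 10]) (simp_all add: swapG_def sw_def Q3_def q3_edge_list_def insert_commute)

lemma ng_0_11_0: "\<not> goodg (swapG (0,True) (11,True))"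
  by (rule ng_multi[of 0 _ 5]) (simp_all add: swapG_def sw_def Q3_def q3_edge_list_def insert_commute)

lemma ng_0_11_1: "\<not> goodg (swapG (0,True) (11,False))"
  by (rule ng_odd3[where ka=4 and kb=1 and kc=11 and va=0 and vb=2 and vc=3]) (simp_all add: swapG_def sw_def Q3_def q3_edge_list_def insert_commute)

lemma ng_1_3_0: "\<not> goodg (swapG (1,True) (3,True))"
  by (rule ng_odd5[where ka=4 and kb=10 and kc=1 and kd=5 and ke=0 and va=0 and vb=2 and vc=6 and vd=3 and ve=1]) (simp_all add: swapG_def sw_def Q3_def q3_edge_list_def insert_commute)

lemma ng_1_3_1: "\<not> goodg (swapG (1,True) (3,False))"
  by (rule ng_multi[of 1 _ 11]) (simp_all add: swapG_def sw_def Q3_def q3_edge_list_def insert_commute)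

lemma ng_1_4_0: "\<not> goodg (swapG (1,True) (4,True))"
  by (rule ng_loop[of 4]) (simp_all add: swapG_def sw_def Q3_def q3_edge_list_def insert_commute)

lemma ng_1_5_1: "\<not> goodg (swapG (1,True) (5,False))"
  by (rule ng_loop[of 1]) (simp_all add: swapG_def sw_def Q3_def q3_edge_list_def insert_commute)

lemma ng_1_6_0: "\<not> goodg (swapG (1,True) (6,True))"
  by (rule ng_multi[of 6 _ 10]) (simp_all add: swapG_def sw_def Q3_def q3_edge_list_def insert_commute)

lemma ng_1_6_1: "\<not> goodg (swapG (1,True) (6,False))"
  by (rule ng_odd3[where ka=8 and kb=6 and kc=4 and va=0 and vb=4 and vc=2]) (simp_all add: swapG_def sw_def Q3_def q3_edge_list_def insert_commute)

lemma ng_1_7_0: "\<not> goodg (swapG (1,True) (7,True))"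
  by (rule ng_odd3[where ka=9 and kb=1 and kc=5 and va=1 and vb=5 and vc=3]) (simp_all add: swapG_def sw_def Q3_def q3_edge_list_def insert_commute)

lemma ng_1_7_1: "\<not> goodg (swapG (1,True) (7,False))"
  by (rule ng_multi[of 1 _ 11]) (simp_all add: swapG_def sw_def Q3_def q3_edge_list_def insert_commute)

lemma ng_1_8_0: "\<not> goodg (swapG (1,True) (8,True))"
  by (rule ng_odd3[where ka=0 and kb=5 and kc=1 and va=0 and vb=1 and vc=3]) (simp_all add: swapG_def sw_def Q3_def q3_edge_list_def insert_commute)

lemma ng_1_8_1: "\<not> goodg (swapG (1,True) (8,False))"
  by (rule ng_multi[of 4 _ 8]) (simp_all add: swapG_def sw_def Q3_def q3_edge_list_def insert_commute)

lemma ng_1_9_0: "\<not> goodg (swapG (1,True) (9,True))"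
  by (rule ng_multi[of 1 _ 5]) (simp_all add: swapG_def sw_def Q3_def q3_edge_list_def insert_commute)

lemma ng_1_9_1: "\<not> goodg (swapG (1,True) (9,False))"
  by (rule ng_odd3[where ka=0 and kb=9 and kc=4 and va=0 and vb=1 and vc=2]) (simp_all add: swapG_def sw_def Q3_def q3_edge_list_def insert_commute)

lemma ng_1_10_1: "\<not> goodg (swapG (1,True) (10,False))"
  by (rule ng_loop[of 10]) (simp_all add: swapG_def sw_def Q3_def q3_edge_list_def insert_commute)

lemma ng_1_11_0: "\<not> goodg (swapG (1,True) (11,True))"
  by (rule ng_loop[of 1]) (simp_all add: swapG_def sw_def Q3_def q3_edge_list_def insert_commute)

lemma ng_2_3_0: "\<not> goodg (swapG (2,True) (3,True))"
  by (rule ng_odd5[where ka=4 and kb=10 and kc=2 and kd=9 and ke=0 and va=0 and vb=2 and vc=6 and vd=5 and ve=1]) (simp_all add: swapG_def sw_def Q3_def q3_edge_list_def insert_commute)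

lemma ng_2_3_1: "\<not> goodg (swapG (2,True) (3,False))"
  by (rule ng_multi[of 2 _ 7]) (simp_all add: swapG_def sw_def Q3_def q3_edge_list_def insert_commute)

lemma ng_2_4_0: "\<not> goodg (swapG (2,True) (4,True))"
  by (rule ng_odd3[where ka=0 and kb=9 and kc=2 and va=0 and vb=1 and vc=5]) (simp_all add: swapG_def sw_def Q3_def q3_edge_list_def insert_commute)

lemma ng_2_4_1: "\<not> goodg (swapG (2,True) (4,False))"
  by (rule ng_multi[of 4 _ 8]) (simp_all add: swapG_def sw_def Q3_def q3_edge_list_def insert_commute)

lemma ng_2_5_0: "\<not> goodg (swapG (2,True) (5,True))"
  by (rule ng_multi[of 2 _ 9]) (simp_all add: swapG_def sw_def Q3_def q3_edge_list_def insert_commute)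

lemma ng_2_5_1: "\<not> goodg (swapG (2,True) (5,False))"
  by (rule ng_odd3[where ka=0 and kb=5 and kc=8 and va=0 and vb=1 and vc=4]) (simp_all add: swapG_def sw_def Q3_def q3_edge_list_def insert_commute)

lemma ng_2_6_1: "\<not> goodg (swapG (2,True) (6,False))"
  by (rule ng_loop[of 6]) (simp_all add: swapG_def sw_def Q3_def q3_edge_list_def insert_commute)

lemma ng_2_7_0: "\<not> goodg (swapG (2,True) (7,True))"
  by (rule ng_loop[of 2]) (simp_all add: swapG_def sw_def Q3_def q3_edge_list_def insert_commute)

lemma ng_2_8_0: "\<not> goodg (swapG (2,True) (8,True))"
  by (rule ng_loop[of 8]) (simp_all add: swapG_def sw_def Q3_def q3_edge_list_def insert_commute)

lemma ng_2_9_1: "\<not> goodg (swapG (2,True) (9,False))"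
  by (rule ng_loop[of 2]) (simp_all add: swapG_def sw_def Q3_def q3_edge_list_def insert_commute)

lemma ng_2_10_0: "\<not> goodg (swapG (2,True) (10,True))"
  by (rule ng_multi[of 6 _ 10]) (simp_all add: swapG_def sw_def Q3_def q3_edge_list_def insert_commute)

lemma ng_2_10_1: "\<not> goodg (swapG (2,True) (10,False))"
  by (rule ng_odd3[where ka=4 and kb=10 and kc=8 and va=0 and vb=2 and vc=4]) (simp_all add: swapG_def sw_def Q3_def q3_edge_list_def insert_commute)

lemma ng_2_11_0: "\<not> goodg (swapG (2,True) (11,True))"
  by (rule ng_odd3[where ka=5 and kb=2 and kc=9 and va=1 and vb=3 and vc=5]) (simp_all add: swapG_def sw_def Q3_def q3_edge_list_def insert_commute)

lemma ng_2_11_1: "\<not> goodg (swapG (2,True) (11,False))"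
  by (rule ng_multi[of 2 _ 7]) (simp_all add: swapG_def sw_def Q3_def q3_edge_list_def insert_commute)

lemma ng_3_4_0: "\<not> goodg (swapG (3,True) (4,True))"
  by (rule ng_multi[of 4 _ 10]) (simp_all add: swapG_def sw_def Q3_def q3_edge_list_def insert_commute)

lemma ng_3_4_1: "\<not> goodg (swapG (3,True) (4,False))"
  by (rule ng_odd3[where ka=8 and kb=6 and kc=4 and va=0 and vb=4 and vc=6]) (simp_all add: swapG_def sw_def Q3_def q3_edge_list_def insert_commute)

lemma ng_3_5_0: "\<not> goodg (swapG (3,True) (5,True))"
  by (rule ng_odd3[where ka=9 and kb=7 and kc=3 and va=1 and vb=5 and vc=7]) (simp_all add: swapG_def sw_def Q3_def q3_edge_list_def insert_commute)

lemma ng_3_5_1: "\<not> goodg (swapG (3,True) (5,False))"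
  by (rule ng_multi[of 3 _ 11]) (simp_all add: swapG_def sw_def Q3_def q3_edge_list_def insert_commute)

lemma ng_3_6_0: "\<not> goodg (swapG (3,True) (6,True))"
  by (rule ng_loop[of 6]) (simp_all add: swapG_def sw_def Q3_def q3_edge_list_def insert_commute)

lemma ng_3_7_1: "\<not> goodg (swapG (3,True) (7,False))"
  by (rule ng_loop[of 3]) (simp_all add: swapG_def sw_def Q3_def q3_edge_list_def insert_commute)

lemma ng_3_8_0: "\<not> goodg (swapG (3,True) (8,True))"
  by (rule ng_multi[of 6 _ 8]) (simp_all add: swapG_def sw_def Q3_def q3_edge_list_def insert_commute)

lemma ng_3_8_1: "\<not> goodg (swapG (3,True) (8,False))"
  by (rule ng_odd3[where ka=4 and kb=10 and kc=8 and va=0 and vb=2 and vc=6]) (simp_all add: swapG_def sw_def Q3_def q3_edge_list_def insert_commute)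

lemma ng_3_9_0: "\<not> goodg (swapG (3,True) (9,True))"
  by (rule ng_odd3[where ka=5 and kb=11 and kc=3 and va=1 and vb=3 and vc=7]) (simp_all add: swapG_def sw_def Q3_def q3_edge_list_def insert_commute)

lemma ng_3_9_1: "\<not> goodg (swapG (3,True) (9,False))"
  by (rule ng_multi[of 3 _ 7]) (simp_all add: swapG_def sw_def Q3_def q3_edge_list_def insert_commute)

lemma ng_3_10_0: "\<not> goodg (swapG (3,True) (10,True))"
  by (rule ng_loop[of 10]) (simp_all add: swapG_def sw_def Q3_def q3_edge_list_def insert_commute)

lemma ng_3_11_1: "\<not> goodg (swapG (3,True) (11,False))"
  by (rule ng_loop[of 3]) (simp_all add: swapG_def sw_def Q3_def q3_edge_list_def insert_commute)

lemma ng_4_5_0: "\<not> goodg (swapG (4,True) (5,True))"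
  by (rule ng_odd5[where ka=8 and kb=6 and kc=3 and kd=11 and ke=5 and va=0 and vb=4 and vc=6 and vd=7 and ve=3]) (simp_all add: swapG_def sw_def Q3_def q3_edge_list_def insert_commute)

lemma ng_4_5_1: "\<not> goodg (swapG (4,True) (5,False))"
  by (rule ng_multi[of 0 _ 5]) (simp_all add: swapG_def sw_def Q3_def q3_edge_list_def insert_commute)

lemma ng_4_6_0: "\<not> goodg (swapG (4,True) (6,True))"
  by (rule ng_odd5[where ka=6 and kb=10 and kc=1 and kd=5 and ke=0 and va=0 and vb=6 and vc=2 and vd=3 and ve=1]) (simp_all add: swapG_def sw_def Q3_def q3_edge_list_def insert_commute)

lemma ng_4_6_1: "\<not> goodg (swapG (4,True) (6,False))"
  by (rule ng_multi[of 4 _ 10]) (simp_all add: swapG_def sw_def Q3_def q3_edge_list_def insert_commute)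

lemma ng_4_8_1: "\<not> goodg (swapG (4,True) (8,False))"
  by (rule ng_loop[of 8]) (simp_all add: swapG_def sw_def Q3_def q3_edge_list_def insert_commute)

lemma ng_4_9_0: "\<not> goodg (swapG (4,True) (9,True))"
  by (rule ng_odd3[where ka=8 and kb=2 and kc=9 and va=0 and vb=4 and vc=5]) (simp_all add: swapG_def sw_def Q3_def q3_edge_list_def insert_commute)

lemma ng_4_9_1: "\<not> goodg (swapG (4,True) (9,False))"
  by (rule ng_multi[of 0 _ 9]) (simp_all add: swapG_def sw_def Q3_def q3_edge_list_def insert_commute)

lemma ng_4_10_0: "\<not> goodg (swapG (4,True) (10,True))"
  by (rule ng_loop[of 4]) (simp_all add: swapG_def sw_def Q3_def q3_edge_list_def insert_commute)

lemma ng_4_11_0: "\<not> goodg (swapG (4,True) (11,True))"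
  by (rule ng_multi[of 1 _ 4]) (simp_all add: swapG_def sw_def Q3_def q3_edge_list_def insert_commute)

lemma ng_4_11_1: "\<not> goodg (swapG (4,True) (11,False))"
  by (rule ng_odd3[where ka=0 and kb=5 and kc=11 and va=0 and vb=1 and vc=3]) (simp_all add: swapG_def sw_def Q3_def q3_edge_list_def insert_commute)

lemma ng_5_7_0: "\<not> goodg (swapG (5,True) (7,True))"
  by (rule ng_odd5[where ka=4 and kb=10 and kc=3 and kd=7 and ke=0 and va=0 and vb=2 and vc=6 and vd=7 and ve=1]) (simp_all add: swapG_def sw_def Q3_def q3_edge_list_def insert_commute)

lemma ng_5_7_1: "\<not> goodg (swapG (5,True) (7,False))"
  by (rule ng_multi[of 5 _ 11]) (simp_all add: swapG_def sw_def Q3_def q3_edge_list_def insert_commute)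

lemma ng_5_8_0: "\<not> goodg (swapG (5,True) (8,True))"
  by (rule ng_odd3[where ka=4 and kb=1 and kc=5 and va=0 and vb=2 and vc=3]) (simp_all add: swapG_def sw_def Q3_def q3_edge_list_def insert_commute)

lemma ng_5_8_1: "\<not> goodg (swapG (5,True) (8,False))"
  by (rule ng_multi[of 0 _ 8]) (simp_all add: swapG_def sw_def Q3_def q3_edge_list_def insert_commute)

lemma ng_5_9_1: "\<not> goodg (swapG (5,True) (9,False))"
  by (rule ng_loop[of 9]) (simp_all add: swapG_def sw_def Q3_def q3_edge_list_def insert_commute)

lemma ng_5_10_0: "\<not> goodg (swapG (5,True) (10,True))"
  by (rule ng_multi[of 1 _ 5]) (simp_all add: swapG_def sw_def Q3_def q3_edge_list_def insert_commute)

lemma ng_5_10_1: "\<not> goodg (swapG (5,True) (10,False))"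
  by (rule ng_odd3[where ka=4 and kb=10 and kc=0 and va=0 and vb=2 and vc=1]) (simp_all add: swapG_def sw_def Q3_def q3_edge_list_def insert_commute)

lemma ng_5_11_0: "\<not> goodg (swapG (5,True) (11,True))"
  by (rule ng_loop[of 5]) (simp_all add: swapG_def sw_def Q3_def q3_edge_list_def insert_commute)

lemma ng_6_7_0: "\<not> goodg (swapG (6,True) (7,True))"
  by (rule ng_odd5[where ka=4 and kb=10 and kc=3 and kd=7 and ke=8 and va=0 and vb=2 and vc=6 and vd=7 and ve=4]) (simp_all add: swapG_def sw_def Q3_def q3_edge_list_def insert_commute)

lemma ng_6_7_1: "\<not> goodg (swapG (6,True) (7,False))"
  by (rule ng_multi[of 2 _ 7]) (simp_all add: swapG_def sw_def Q3_def q3_edge_list_def insert_commute)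

lemma ng_6_8_0: "\<not> goodg (swapG (6,True) (8,True))"
  by (rule ng_loop[of 8]) (simp_all add: swapG_def sw_def Q3_def q3_edge_list_def insert_commute)

lemma ng_6_9_0: "\<not> goodg (swapG (6,True) (9,True))"
  by (rule ng_multi[of 2 _ 9]) (simp_all add: swapG_def sw_def Q3_def q3_edge_list_def insert_commute)

lemma ng_6_9_1: "\<not> goodg (swapG (6,True) (9,False))"
  by (rule ng_odd3[where ka=0 and kb=9 and kc=8 and va=0 and vb=1 and vc=4]) (simp_all add: swapG_def sw_def Q3_def q3_edge_list_def insert_commute)

lemma ng_6_10_1: "\<not> goodg (swapG (6,True) (10,False))"
  by (rule ng_loop[of 6]) (simp_all add: swapG_def sw_def Q3_def q3_edge_list_def insert_commute)

lemma ng_6_11_0: "\<not> goodg (swapG (6,True) (11,True))"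
  by (rule ng_odd3[where ka=1 and kb=6 and kc=10 and va=2 and vb=3 and vc=6]) (simp_all add: swapG_def sw_def Q3_def q3_edge_list_def insert_commute)

lemma ng_6_11_1: "\<not> goodg (swapG (6,True) (11,False))"
  by (rule ng_multi[of 3 _ 6]) (simp_all add: swapG_def sw_def Q3_def q3_edge_list_def insert_commute)

lemma ng_7_8_0: "\<not> goodg (swapG (7,True) (8,True))"
  by (rule ng_multi[of 2 _ 8]) (simp_all add: swapG_def sw_def Q3_def q3_edge_list_def insert_commute)

lemma ng_7_8_1: "\<not> goodg (swapG (7,True) (8,False))"
  by (rule ng_odd3[where ka=0 and kb=9 and kc=8 and va=0 and vb=1 and vc=5]) (simp_all add: swapG_def sw_def Q3_def q3_edge_list_def insert_commute)

lemma ng_7_9_0: "\<not> goodg (swapG (7,True) (9,True))"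
  by (rule ng_loop[of 9]) (simp_all add: swapG_def sw_def Q3_def q3_edge_list_def insert_commute)

lemma ng_7_10_0: "\<not> goodg (swapG (7,True) (10,True))"
  by (rule ng_odd3[where ka=1 and kb=11 and kc=7 and va=2 and vb=3 and vc=7]) (simp_all add: swapG_def sw_def Q3_def q3_edge_list_def insert_commute)

lemma ng_7_10_1: "\<not> goodg (swapG (7,True) (10,False))"
  by (rule ng_multi[of 3 _ 7]) (simp_all add: swapG_def sw_def Q3_def q3_edge_list_def insert_commute)

lemma ng_7_11_1: "\<not> goodg (swapG (7,True) (11,False))"
  by (rule ng_loop[of 7]) (simp_all add: swapG_def sw_def Q3_def q3_edge_list_def insert_commute)

lemma ng_8_9_0: "\<not> goodg (swapG (8,True) (9,True))"
  by (rule ng_odd5[where ka=4 and kb=10 and kc=3 and kd=7 and ke=9 and va=0 and vb=2 and vc=6 and vd=7 and ve=5]) (simp_all add: swapG_def sw_def Q3_def q3_edge_list_def insert_commute)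

lemma ng_8_9_1: "\<not> goodg (swapG (8,True) (9,False))"
  by (rule ng_multi[of 0 _ 9]) (simp_all add: swapG_def sw_def Q3_def q3_edge_list_def insert_commute)

lemma ng_8_10_0: "\<not> goodg (swapG (8,True) (10,True))"
  by (rule ng_odd5[where ka=4 and kb=8 and kc=2 and kd=9 and ke=0 and va=0 and vb=2 and vc=4 and vd=5 and ve=1]) (simp_all add: swapG_def sw_def Q3_def q3_edge_list_def insert_commute)

lemma ng_8_10_1: "\<not> goodg (swapG (8,True) (10,False))"
  by (rule ng_multi[of 4 _ 10]) (simp_all add: swapG_def sw_def Q3_def q3_edge_list_def insert_commute)

lemma ng_9_11_0: "\<not> goodg (swapG (9,True) (11,True))"
  by (rule ng_odd5[where ka=4 and kb=10 and kc=3 and kd=11 and ke=0 and va=0 and vb=2 and vc=6 and vd=7 and ve=1]) (simp_all add: swapG_def sw_def Q3_def q3_edge_list_def insert_commute)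

lemma ng_9_11_1: "\<not> goodg (swapG (9,True) (11,False))"
  by (rule ng_multi[of 5 _ 11]) (simp_all add: swapG_def sw_def Q3_def q3_edge_list_def insert_commute)

lemma ng_10_11_0: "\<not> goodg (swapG (10,True) (11,True))"
  by (rule ng_odd5[where ka=8 and kb=6 and kc=3 and kd=11 and ke=4 and va=0 and vb=4 and vc=6 and vd=7 and ve=2]) (simp_all add: swapG_def sw_def Q3_def q3_edge_list_def insert_commute)

lemma ng_10_11_1: "\<not> goodg (swapG (10,True) (11,False))"
  by (rule ng_multi[of 1 _ 11]) (simp_all add: swapG_def sw_def Q3_def q3_edge_list_def insert_commute)



definition K33 :: graph where
  "K33 = \<lparr>verts = {0..<6}, edges = {0..<9}, endp = (\<lambda>e b. if b then e div 3 else 3 + e mod 3)\<rparr>"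

definition lam33 :: "cet \<Rightarrow> cet \<Rightarrow> cet \<Rightarrow> nat \<Rightarrow> bool \<Rightarrow> cet" where
  "lam33 x0 x1 x2 e b = (let x = (if e div 3 = 0 then x0 else if e div 3 = 1 then x1 else x2) in if b then x else hatc x)"

lemma upt9: "{0..<9::nat} = {0,1,2,3,4,5,6,7,8}"
  by (simp add: atLeast0LessThan lessThan_Suc eval_nat_numeral insert_commute)
lemma upt6: "{0..<6::nat} = {0,1,2,3,4,5}"
  by (simp add: atLeast0LessThan lessThan_Suc eval_nat_numeral insert_commute)

lemma K33_tiles:
  "tile_at K33 (lam33 x0 x1 x2) 0 = {#x0,x0,x0#}"
  "tile_at K33 (lam33 x0 x1 x2) 1 = {#x1,x1,x1#}"
  "tile_at K33 (lam33 x0 x1 x2) 2 = {#x2,x2,x2#}"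
  "tile_at K33 (lam33 x0 x1 x2) 3 = {#hatc x0,hatc x1,hatc x2#}"
  "tile_at K33 (lam33 x0 x1 x2) 4 = {#hatc x0,hatc x1,hatc x2#}"
  "tile_at K33 (lam33 x0 x1 x2) 5 = {#hatc x0,hatc x1,hatc x2#}"
  by (simp_all add: tile_at_def K33_def lam33_def upt9 add_mset_commute)

lemma hatc_hatc[simp]: "hatc (hatc x) = x" by (cases x) auto

lemma K33_real:
  assumes "{#x0,x0,x0#} \<in> P" "{#x1,x1,x1#} \<in> P" "{#x2,x2,x2#} \<in> P" "{#hatc x0,hatc x1,hatc x2#} \<in> P"
  shows "realizes P K33" "wf_graph K33" "card (verts K33) = 6"
proof -
  show "realizes P K33" unfolding realizes_iff
  proof (intro exI conjI)
    show "assembly_design K33 (lam33 x0 x1 x2)"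
      unfolding assembly_design_def by (simp add: K33_def lam33_def Let_def)
    show "\<forall>v\<in>verts K33. tile_at K33 (lam33 x0 x1 x2) v \<in> P"
    proof
      fix v assume "v \<in> verts K33"
      then have "v = 0 \<or> v = 1 \<or> v = 2 \<or> v = 3 \<or> v = 4 \<or> v = 5" by (auto simp: K33_def)
      then show "tile_at K33 (lam33 x0 x1 x2) v \<in> P"
        using assms K33_tiles[of x0 x1 x2] by (elim disjE) simp_all
    qed
  qed
  show "wf_graph K33" unfolding wf_graph_def K33_def by auto
  show "card (verts K33) = 6" by (simp add: K33_def)
qed



definition symc :: "cet \<Rightarrow> nat" where "symc x = (case x of Unh a \<Rightarrow> a | Hat a \<Rightarrow> a)"
definition isU :: "cet \<Rightarrow> bool" where "isU x = (case x of Unh a \<Rightarrow> True | Hat a \<Rightarrow> False)"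

lemma cet_neq0: "x \<noteq> y \<Longrightarrow> \<not> (symc x = symc y \<and> isU x = isU y)"
  by (cases x; cases y) (auto simp: symc_def isU_def)
lemma cet_neq1: "x \<noteq> y \<Longrightarrow> y = hatc z \<Longrightarrow> \<not> (symc x = symc z \<and> isU x \<noteq> isU z)"
  by (cases x; cases z) (auto simp: symc_def isU_def)
lemma cet_eq0: "symc x = symc y \<Longrightarrow> isU x = isU y \<Longrightarrow> x = y"
  by (cases x; cases y) (auto simp: symc_def isU_def)
lemma cet_eq1: "symc x = symc y \<Longrightarrow> isU x \<noteq> isU y \<Longrightarrow> x = hatc y"
  by (cases x; cases y) (auto simp: symc_def isU_def)

lemma neq_from_ng:
  assumes "realizes_scen3 P Q3" "assembly_design Q3 lam" "\<forall>v\<in>{0..<8}. tile_at Q3 lam v \<in> P"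
    "i \<in> {0..<12}" "j \<in> {0..<12}" "\<not> goodg (swapG (i,bi) (j,bj))"
  shows "lam i bi \<noteq> lam j bj"
  using swap_good[OF assms(1-5)] assms(6) by blast

lemma Q3_tiles:
  "tile_at Q3 lam 0 = {#lam 0 True, lam 4 True, lam 8 True#}"
  "tile_at Q3 lam 1 = {#lam 0 False, lam 5 True, lam 9 True#}"
  "tile_at Q3 lam 2 = {#lam 1 True, lam 4 False, lam 10 True#}"
  "tile_at Q3 lam 3 = {#lam 1 False, lam 5 False, lam 11 True#}"
  "tile_at Q3 lam 4 = {#lam 2 True, lam 6 True, lam 8 False#}"
  "tile_at Q3 lam 5 = {#lam 2 False, lam 7 True, lam 9 False#}"
  "tile_at Q3 lam 6 = {#lam 3 True, lam 6 False, lam 10 False#}"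
  "tile_at Q3 lam 7 = {#lam 3 False, lam 7 False, lam 11 False#}"
  by (simp_all add: tile_at_def Q3_def upt12 q3_edge_list_def add_mset_commute)

lemma comb:
  fixes s :: "nat \<Rightarrow> nat" and b :: "nat \<Rightarrow> bool"
  assumes "\<not> (s 0 = s 1 \<and> b 0 = b 1)"
    and "\<not> (s 0 = s 1 \<and> b 0 \<noteq> b 1)"
    and "\<not> (s 0 = s 2 \<and> b 0 = b 2)"
    and "\<not> (s 0 = s 2 \<and> b 0 \<noteq> b 2)"
    and "\<not> (s 0 = s 4 \<and> b 0 \<noteq> b 4)"
    and "\<not> (s 0 = s 5 \<and> b 0 = b 5)"
    and "\<not> (s 0 = s 6 \<and> b 0 = b 6)"
    and "\<not> (s 0 = s 6 \<and> b 0 \<noteq> b 6)"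
    and "\<not> (s 0 = s 7 \<and> b 0 = b 7)"
    and "\<not> (s 0 = s 7 \<and> b 0 \<noteq> b 7)"
    and "\<not> (s 0 = s 8 \<and> b 0 \<noteq> b 8)"
    and "\<not> (s 0 = s 9 \<and> b 0 = b 9)"
    and "\<not> (s 0 = s 10 \<and> b 0 = b 10)"
    and "\<not> (s 0 = s 10 \<and> b 0 \<noteq> b 10)"
    and "\<not> (s 0 = s 11 \<and> b 0 = b 11)"
    and "\<not> (s 0 = s 11 \<and> b 0 \<noteq> b 11)"
    and "\<not> (s 1 = s 3 \<and> b 1 = b 3)"
    and "\<not> (s 1 = s 3 \<and> b 1 \<noteq> b 3)"
    and "\<not> (s 1 = s 4 \<and> b 1 = b 4)"
    and "\<not> (s 1 = s 5 \<and> b 1 \<noteq> b 5)"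
    and "\<not> (s 1 = s 6 \<and> b 1 = b 6)"
    and "\<not> (s 1 = s 6 \<and> b 1 \<noteq> b 6)"
    and "\<not> (s 1 = s 7 \<and> b 1 = b 7)"
    and "\<not> (s 1 = s 7 \<and> b 1 \<noteq> b 7)"
    and "\<not> (s 1 = s 8 \<and> b 1 = b 8)"
    and "\<not> (s 1 = s 8 \<and> b 1 \<noteq> b 8)"
    and "\<not> (s 1 = s 9 \<and> b 1 = b 9)"
    and "\<not> (s 1 = s 9 \<and> b 1 \<noteq> b 9)"
    and "\<not> (s 1 = s 10 \<and> b 1 \<noteq> b 10)"
    and "\<not> (s 1 = s 11 \<and> b 1 = b 11)"
    and "\<not> (s 2 = s 3 \<and> b 2 = b 3)"
    and "\<not> (s 2 = s 3 \<and> b 2 \<noteq> b 3)"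
    and "\<not> (s 2 = s 4 \<and> b 2 = b 4)"
    and "\<not> (s 2 = s 4 \<and> b 2 \<noteq> b 4)"
    and "\<not> (s 2 = s 5 \<and> b 2 = b 5)"
    and "\<not> (s 2 = s 5 \<and> b 2 \<noteq> b 5)"
    and "\<not> (s 2 = s 6 \<and> b 2 \<noteq> b 6)"
    and "\<not> (s 2 = s 7 \<and> b 2 = b 7)"
    and "\<not> (s 2 = s 8 \<and> b 2 = b 8)"
    and "\<not> (s 2 = s 9 \<and> b 2 \<noteq> b 9)"
    and "\<not> (s 2 = s 10 \<and> b 2 = b 10)"
    and "\<not> (s 2 = s 10 \<and> b 2 \<noteq> b 10)"
    and "\<not> (s 2 = s 11 \<and> b 2 = b 11)"
    and "\<not> (s 2 = s 11 \<and> b 2 \<noteq> b 11)"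
    and "\<not> (s 3 = s 4 \<and> b 3 = b 4)"
    and "\<not> (s 3 = s 4 \<and> b 3 \<noteq> b 4)"
    and "\<not> (s 3 = s 5 \<and> b 3 = b 5)"
    and "\<not> (s 3 = s 5 \<and> b 3 \<noteq> b 5)"
    and "\<not> (s 3 = s 6 \<and> b 3 = b 6)"
    and "\<not> (s 3 = s 7 \<and> b 3 \<noteq> b 7)"
    and "\<not> (s 3 = s 8 \<and> b 3 = b 8)"
    and "\<not> (s 3 = s 8 \<and> b 3 \<noteq> b 8)"
    and "\<not> (s 3 = s 9 \<and> b 3 = b 9)"
    and "\<not> (s 3 = s 9 \<and> b 3 \<noteq> b 9)"
    and "\<not> (s 3 = s 10 \<and> b 3 = b 10)"
    and "\<not> (s 3 = s 11 \<and> b 3 \<noteq> b 11)"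
    and "\<not> (s 4 = s 5 \<and> b 4 = b 5)"
    and "\<not> (s 4 = s 5 \<and> b 4 \<noteq> b 5)"
    and "\<not> (s 4 = s 6 \<and> b 4 = b 6)"
    and "\<not> (s 4 = s 6 \<and> b 4 \<noteq> b 6)"
    and "\<not> (s 4 = s 8 \<and> b 4 \<noteq> b 8)"
    and "\<not> (s 4 = s 9 \<and> b 4 = b 9)"
    and "\<not> (s 4 = s 9 \<and> b 4 \<noteq> b 9)"
    and "\<not> (s 4 = s 10 \<and> b 4 = b 10)"
    and "\<not> (s 4 = s 11 \<and> b 4 = b 11)"
    and "\<not> (s 4 = s 11 \<and> b 4 \<noteq> b 11)"
    and "\<not> (s 5 = s 7 \<and> b 5 = b 7)"
    and "\<not> (s 5 = s 7 \<and> b 5 \<noteq> b 7)"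
    and "\<not> (s 5 = s 8 \<and> b 5 = b 8)"
    and "\<not> (s 5 = s 8 \<and> b 5 \<noteq> b 8)"
    and "\<not> (s 5 = s 9 \<and> b 5 \<noteq> b 9)"
    and "\<not> (s 5 = s 10 \<and> b 5 = b 10)"
    and "\<not> (s 5 = s 10 \<and> b 5 \<noteq> b 10)"
    and "\<not> (s 5 = s 11 \<and> b 5 = b 11)"
    and "\<not> (s 6 = s 7 \<and> b 6 = b 7)"
    and "\<not> (s 6 = s 7 \<and> b 6 \<noteq> b 7)"
    and "\<not> (s 6 = s 8 \<and> b 6 = b 8)"
    and "\<not> (s 6 = s 9 \<and> b 6 = b 9)"
    and "\<not> (s 6 = s 9 \<and> b 6 \<noteq> b 9)"
    and "\<not> (s 6 = s 10 \<and> b 6 \<noteq> b 10)"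
    and "\<not> (s 6 = s 11 \<and> b 6 = b 11)"
    and "\<not> (s 6 = s 11 \<and> b 6 \<noteq> b 11)"
    and "\<not> (s 7 = s 8 \<and> b 7 = b 8)"
    and "\<not> (s 7 = s 8 \<and> b 7 \<noteq> b 8)"
    and "\<not> (s 7 = s 9 \<and> b 7 = b 9)"
    and "\<not> (s 7 = s 10 \<and> b 7 = b 10)"
    and "\<not> (s 7 = s 10 \<and> b 7 \<noteq> b 10)"
    and "\<not> (s 7 = s 11 \<and> b 7 \<noteq> b 11)"
    and "\<not> (s 8 = s 9 \<and> b 8 = b 9)"
    and "\<not> (s 8 = s 9 \<and> b 8 \<noteq> b 9)"
    and "\<not> (s 8 = s 10 \<and> b 8 = b 10)"
    and "\<not> (s 8 = s 10 \<and> b 8 \<noteq> b 10)"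
    and "\<not> (s 9 = s 11 \<and> b 9 = b 11)"
    and "\<not> (s 9 = s 11 \<and> b 9 \<noteq> b 11)"
    and "\<not> (s 10 = s 11 \<and> b 10 = b 11)"
    and "\<not> (s 10 = s 11 \<and> b 10 \<noteq> b 11)"
    and "s 2 = s 0 \<or> s 2 = s 1 \<or> s 2 = s 6 \<or> s 2 = s 7"
    and "s 3 = s 0 \<or> s 3 = s 1 \<or> s 3 = s 6 \<or> s 3 = s 7"
    and "s 4 = s 0 \<or> s 4 = s 1 \<or> s 4 = s 6 \<or> s 4 = s 7"
    and "s 5 = s 0 \<or> s 5 = s 1 \<or> s 5 = s 6 \<or> s 5 = s 7"
    and "s 8 = s 0 \<or> s 8 = s 1 \<or> s 8 = s 6 \<or> s 8 = s 7"
    and "s 9 = s 0 \<or> s 9 = s 1 \<or> s 9 = s 6 \<or> s 9 = s 7"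
    and "s 10 = s 0 \<or> s 10 = s 1 \<or> s 10 = s 6 \<or> s 10 = s 7"
    and "s 11 = s 0 \<or> s 11 = s 1 \<or> s 11 = s 6 \<or> s 11 = s 7"
  shows "(s 1 = s 5 \<and> s 5 = s 11 \<and> b 1 = b 5 \<and> b 11 \<noteq> b 1 \<and> s 2 = s 7 \<and> s 7 = s 9 \<and> b 2 = b 9 \<and> b 7 \<noteq> b 2 \<and> s 3 = s 6 \<and> s 6 = s 10 \<and> b 6 = b 10 \<and> b 3 \<noteq> b 6) \<or> (s 0 = s 5 \<and> s 5 = s 9 \<and> b 5 = b 9 \<and> b 0 \<noteq> b 5 \<and> s 1 = s 4 \<and> s 4 = s 10 \<and> b 1 = b 10 \<and> b 4 \<noteq> b 1 \<and> s 2 = s 6 \<and> s 6 = s 8 \<and> b 2 = b 6 \<and> b 8 \<noteq> b 2)"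
  using assms by (smt (z3))

lemma lower_bound:
  assumes sc: "realizes_scen3 P Q3"
  shows "card (sigma_of P) \<ge> 5"
proof (rule ccontr)
  assume "\<not> 5 \<le> card (sigma_of P)"
  then have c4: "card (sigma_of P) \<le> 4" by simp
  have pot: "is_pot P" and rq: "realizes P Q3"
    and minv: "\<And>H. wf_graph H \<Longrightarrow> realizes P H \<Longrightarrow> card (verts H) \<ge> card (verts Q3)"
    using sc unfolding realizes_scen3_def by blast+
  obtain lam where des: "assembly_design Q3 lam" and tl: "\<forall>v\<in>{0..<8}. tile_at Q3 lam v \<in> P"
    using rq unfolding realizes_iff Q3_simps by blast
  have lF: "lam e False = hatc (lam e True)" if "e \<in> {0..<12}" for e
    using des that unfolding assembly_design_def Q3_simps by blast
  have finP: "finite P" using pot unfolding is_pot_def by blast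
  have finS: "finite (sigma_of P)"
  proof (rule finite_subset)
    show "sigma_of P \<subseteq> (\<Union>t\<in>P. symc ` set_mset t)"
    proof
      fix a assume "a \<in> sigma_of P"
      then obtain t where t: "t \<in> P" "Unh a \<in># t \<or> Hat a \<in># t" unfolding sigma_of_def by blast
      then show "a \<in> (\<Union>t\<in>P. symc ` set_mset t)"
        by (metis (no_types, lifting) UN_iff cet.simps(5) cet.simps(6) image_eqI symc_def)
    qed
    show "finite (\<Union>t\<in>P. symc ` set_mset t)" using finP by simp
  qed
  have symin: "symc (lam e True) \<in> sigma_of P" if e: "e \<in> {0..<12}" for e
  proof -
    have "lam e True \<in># tile_at Q3 lam (endp Q3 e True)" by (rule tile_mem) (use e in \<open>simp_all add: Q3_simps\<close>)
    moreover have "tile_at Q3 lam (endp Q3 e True) \<in> P" using tl Q3_endp[OF e] by blast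
    ultimately show ?thesis unfolding sigma_of_def symc_def by (cases "lam e True") auto
  qed
  define s where "s e = symc (lam e True)" for e
  define b where "b e = isU (lam e True)" for e
  have h_0_1_0: "\<not> (s 0 = s 1 \<and> b 0 = b 1)"
    unfolding s_def b_def by (rule cet_neq0[OF neq_from_ng[OF sc des tl _ _ ng_0_1_0]]) simp_all
  have h_0_1_1: "\<not> (s 0 = s 1 \<and> b 0 \<noteq> b 1)"
    unfolding s_def b_def by (rule cet_neq1[OF neq_from_ng[OF sc des tl _ _ ng_0_1_1] lF]) simp_all
  have h_0_2_0: "\<not> (s 0 = s 2 \<and> b 0 = b 2)"
    unfolding s_def b_def by (rule cet_neq0[OF neq_from_ng[OF sc des tl _ _ ng_0_2_0]]) simp_all
  have h_0_2_1: "\<not> (s 0 = s 2 \<and> b 0 \<noteq> b 2)"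
    unfolding s_def b_def by (rule cet_neq1[OF neq_from_ng[OF sc des tl _ _ ng_0_2_1] lF]) simp_all
  have h_0_4_1: "\<not> (s 0 = s 4 \<and> b 0 \<noteq> b 4)"
    unfolding s_def b_def by (rule cet_neq1[OF neq_from_ng[OF sc des tl _ _ ng_0_4_1] lF]) simp_all
  have h_0_5_0: "\<not> (s 0 = s 5 \<and> b 0 = b 5)"
    unfolding s_def b_def by (rule cet_neq0[OF neq_from_ng[OF sc des tl _ _ ng_0_5_0]]) simp_all
  have h_0_6_0: "\<not> (s 0 = s 6 \<and> b 0 = b 6)"
    unfolding s_def b_def by (rule cet_neq0[OF neq_from_ng[OF sc des tl _ _ ng_0_6_0]]) simp_all
  have h_0_6_1: "\<not> (s 0 = s 6 \<and> b 0 \<noteq> b 6)"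
    unfolding s_def b_def by (rule cet_neq1[OF neq_from_ng[OF sc des tl _ _ ng_0_6_1] lF]) simp_all
  have h_0_7_0: "\<not> (s 0 = s 7 \<and> b 0 = b 7)"
    unfolding s_def b_def by (rule cet_neq0[OF neq_from_ng[OF sc des tl _ _ ng_0_7_0]]) simp_all
  have h_0_7_1: "\<not> (s 0 = s 7 \<and> b 0 \<noteq> b 7)"
    unfolding s_def b_def by (rule cet_neq1[OF neq_from_ng[OF sc des tl _ _ ng_0_7_1] lF]) simp_all
  have h_0_8_1: "\<not> (s 0 = s 8 \<and> b 0 \<noteq> b 8)"
    unfolding s_def b_def by (rule cet_neq1[OF neq_from_ng[OF sc des tl _ _ ng_0_8_1] lF]) simp_all
  have h_0_9_0: "\<not> (s 0 = s 9 \<and> b 0 = b 9)"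
    unfolding s_def b_def by (rule cet_neq0[OF neq_from_ng[OF sc des tl _ _ ng_0_9_0]]) simp_all
  have h_0_10_0: "\<not> (s 0 = s 10 \<and> b 0 = b 10)"
    unfolding s_def b_def by (rule cet_neq0[OF neq_from_ng[OF sc des tl _ _ ng_0_10_0]]) simp_all
  have h_0_10_1: "\<not> (s 0 = s 10 \<and> b 0 \<noteq> b 10)"
    unfolding s_def b_def by (rule cet_neq1[OF neq_from_ng[OF sc des tl _ _ ng_0_10_1] lF]) simp_all
  have h_0_11_0: "\<not> (s 0 = s 11 \<and> b 0 = b 11)"
    unfolding s_def b_def by (rule cet_neq0[OF neq_from_ng[OF sc des tl _ _ ng_0_11_0]]) simp_all
  have h_0_11_1: "\<not> (s 0 = s 11 \<and> b 0 \<noteq> b 11)"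
    unfolding s_def b_def by (rule cet_neq1[OF neq_from_ng[OF sc des tl _ _ ng_0_11_1] lF]) simp_all
  have h_1_3_0: "\<not> (s 1 = s 3 \<and> b 1 = b 3)"
    unfolding s_def b_def by (rule cet_neq0[OF neq_from_ng[OF sc des tl _ _ ng_1_3_0]]) simp_all
  have h_1_3_1: "\<not> (s 1 = s 3 \<and> b 1 \<noteq> b 3)"
    unfolding s_def b_def by (rule cet_neq1[OF neq_from_ng[OF sc des tl _ _ ng_1_3_1] lF]) simp_all
  have h_1_4_0: "\<not> (s 1 = s 4 \<and> b 1 = b 4)"
    unfolding s_def b_def by (rule cet_neq0[OF neq_from_ng[OF sc des tl _ _ ng_1_4_0]]) simp_all
  have h_1_5_1: "\<not> (s 1 = s 5 \<and> b 1 \<noteq> b 5)"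
    unfolding s_def b_def by (rule cet_neq1[OF neq_from_ng[OF sc des tl _ _ ng_1_5_1] lF]) simp_all
  have h_1_6_0: "\<not> (s 1 = s 6 \<and> b 1 = b 6)"
    unfolding s_def b_def by (rule cet_neq0[OF neq_from_ng[OF sc des tl _ _ ng_1_6_0]]) simp_all
  have h_1_6_1: "\<not> (s 1 = s 6 \<and> b 1 \<noteq> b 6)"
    unfolding s_def b_def by (rule cet_neq1[OF neq_from_ng[OF sc des tl _ _ ng_1_6_1] lF]) simp_all
  have h_1_7_0: "\<not> (s 1 = s 7 \<and> b 1 = b 7)"
    unfolding s_def b_def by (rule cet_neq0[OF neq_from_ng[OF sc des tl _ _ ng_1_7_0]]) simp_all
  have h_1_7_1: "\<not> (s 1 = s 7 \<and> b 1 \<noteq> b 7)"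
    unfolding s_def b_def by (rule cet_neq1[OF neq_from_ng[OF sc des tl _ _ ng_1_7_1] lF]) simp_all
  have h_1_8_0: "\<not> (s 1 = s 8 \<and> b 1 = b 8)"
    unfolding s_def b_def by (rule cet_neq0[OF neq_from_ng[OF sc des tl _ _ ng_1_8_0]]) simp_all
  have h_1_8_1: "\<not> (s 1 = s 8 \<and> b 1 \<noteq> b 8)"
    unfolding s_def b_def by (rule cet_neq1[OF neq_from_ng[OF sc des tl _ _ ng_1_8_1] lF]) simp_all
  have h_1_9_0: "\<not> (s 1 = s 9 \<and> b 1 = b 9)"
    unfolding s_def b_def by (rule cet_neq0[OF neq_from_ng[OF sc des tl _ _ ng_1_9_0]]) simp_all
  have h_1_9_1: "\<not> (s 1 = s 9 \<and> b 1 \<noteq> b 9)"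
    unfolding s_def b_def by (rule cet_neq1[OF neq_from_ng[OF sc des tl _ _ ng_1_9_1] lF]) simp_all
  have h_1_10_1: "\<not> (s 1 = s 10 \<and> b 1 \<noteq> b 10)"
    unfolding s_def b_def by (rule cet_neq1[OF neq_from_ng[OF sc des tl _ _ ng_1_10_1] lF]) simp_all
  have h_1_11_0: "\<not> (s 1 = s 11 \<and> b 1 = b 11)"
    unfolding s_def b_def by (rule cet_neq0[OF neq_from_ng[OF sc des tl _ _ ng_1_11_0]]) simp_all
  have h_2_3_0: "\<not> (s 2 = s 3 \<and> b 2 = b 3)"
    unfolding s_def b_def by (rule cet_neq0[OF neq_from_ng[OF sc des tl _ _ ng_2_3_0]]) simp_all
  have h_2_3_1: "\<not> (s 2 = s 3 \<and> b 2 \<noteq> b 3)"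
    unfolding s_def b_def by (rule cet_neq1[OF neq_from_ng[OF sc des tl _ _ ng_2_3_1] lF]) simp_all
  have h_2_4_0: "\<not> (s 2 = s 4 \<and> b 2 = b 4)"
    unfolding s_def b_def by (rule cet_neq0[OF neq_from_ng[OF sc des tl _ _ ng_2_4_0]]) simp_all
  have h_2_4_1: "\<not> (s 2 = s 4 \<and> b 2 \<noteq> b 4)"
    unfolding s_def b_def by (rule cet_neq1[OF neq_from_ng[OF sc des tl _ _ ng_2_4_1] lF]) simp_all
  have h_2_5_0: "\<not> (s 2 = s 5 \<and> b 2 = b 5)"
    unfolding s_def b_def by (rule cet_neq0[OF neq_from_ng[OF sc des tl _ _ ng_2_5_0]]) simp_all
  have h_2_5_1: "\<not> (s 2 = s 5 \<and> b 2 \<noteq> b 5)"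
    unfolding s_def b_def by (rule cet_neq1[OF neq_from_ng[OF sc des tl _ _ ng_2_5_1] lF]) simp_all
  have h_2_6_1: "\<not> (s 2 = s 6 \<and> b 2 \<noteq> b 6)"
    unfolding s_def b_def by (rule cet_neq1[OF neq_from_ng[OF sc des tl _ _ ng_2_6_1] lF]) simp_all
  have h_2_7_0: "\<not> (s 2 = s 7 \<and> b 2 = b 7)"
    unfolding s_def b_def by (rule cet_neq0[OF neq_from_ng[OF sc des tl _ _ ng_2_7_0]]) simp_all
  have h_2_8_0: "\<not> (s 2 = s 8 \<and> b 2 = b 8)"
    unfolding s_def b_def by (rule cet_neq0[OF neq_from_ng[OF sc des tl _ _ ng_2_8_0]]) simp_all
  have h_2_9_1: "\<not> (s 2 = s 9 \<and> b 2 \<noteq> b 9)"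
    unfolding s_def b_def by (rule cet_neq1[OF neq_from_ng[OF sc des tl _ _ ng_2_9_1] lF]) simp_all
  have h_2_10_0: "\<not> (s 2 = s 10 \<and> b 2 = b 10)"
    unfolding s_def b_def by (rule cet_neq0[OF neq_from_ng[OF sc des tl _ _ ng_2_10_0]]) simp_all
  have h_2_10_1: "\<not> (s 2 = s 10 \<and> b 2 \<noteq> b 10)"
    unfolding s_def b_def by (rule cet_neq1[OF neq_from_ng[OF sc des tl _ _ ng_2_10_1] lF]) simp_all
  have h_2_11_0: "\<not> (s 2 = s 11 \<and> b 2 = b 11)"
    unfolding s_def b_def by (rule cet_neq0[OF neq_from_ng[OF sc des tl _ _ ng_2_11_0]]) simp_all
  have h_2_11_1: "\<not> (s 2 = s 11 \<and> b 2 \<noteq> b 11)"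
    unfolding s_def b_def by (rule cet_neq1[OF neq_from_ng[OF sc des tl _ _ ng_2_11_1] lF]) simp_all
  have h_3_4_0: "\<not> (s 3 = s 4 \<and> b 3 = b 4)"
    unfolding s_def b_def by (rule cet_neq0[OF neq_from_ng[OF sc des tl _ _ ng_3_4_0]]) simp_all
  have h_3_4_1: "\<not> (s 3 = s 4 \<and> b 3 \<noteq> b 4)"
    unfolding s_def b_def by (rule cet_neq1[OF neq_from_ng[OF sc des tl _ _ ng_3_4_1] lF]) simp_all
  have h_3_5_0: "\<not> (s 3 = s 5 \<and> b 3 = b 5)"
    unfolding s_def b_def by (rule cet_neq0[OF neq_from_ng[OF sc des tl _ _ ng_3_5_0]]) simp_all
  have h_3_5_1: "\<not> (s 3 = s 5 \<and> b 3 \<noteq> b 5)"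
    unfolding s_def b_def by (rule cet_neq1[OF neq_from_ng[OF sc des tl _ _ ng_3_5_1] lF]) simp_all
  have h_3_6_0: "\<not> (s 3 = s 6 \<and> b 3 = b 6)"
    unfolding s_def b_def by (rule cet_neq0[OF neq_from_ng[OF sc des tl _ _ ng_3_6_0]]) simp_all
  have h_3_7_1: "\<not> (s 3 = s 7 \<and> b 3 \<noteq> b 7)"
    unfolding s_def b_def by (rule cet_neq1[OF neq_from_ng[OF sc des tl _ _ ng_3_7_1] lF]) simp_all
  have h_3_8_0: "\<not> (s 3 = s 8 \<and> b 3 = b 8)"
    unfolding s_def b_def by (rule cet_neq0[OF neq_from_ng[OF sc des tl _ _ ng_3_8_0]]) simp_all
  have h_3_8_1: "\<not> (s 3 = s 8 \<and> b 3 \<noteq> b 8)"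
    unfolding s_def b_def by (rule cet_neq1[OF neq_from_ng[OF sc des tl _ _ ng_3_8_1] lF]) simp_all
  have h_3_9_0: "\<not> (s 3 = s 9 \<and> b 3 = b 9)"
    unfolding s_def b_def by (rule cet_neq0[OF neq_from_ng[OF sc des tl _ _ ng_3_9_0]]) simp_all
  have h_3_9_1: "\<not> (s 3 = s 9 \<and> b 3 \<noteq> b 9)"
    unfolding s_def b_def by (rule cet_neq1[OF neq_from_ng[OF sc des tl _ _ ng_3_9_1] lF]) simp_all
  have h_3_10_0: "\<not> (s 3 = s 10 \<and> b 3 = b 10)"
    unfolding s_def b_def by (rule cet_neq0[OF neq_from_ng[OF sc des tl _ _ ng_3_10_0]]) simp_all
  have h_3_11_1: "\<not> (s 3 = s 11 \<and> b 3 \<noteq> b 11)"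
    unfolding s_def b_def by (rule cet_neq1[OF neq_from_ng[OF sc des tl _ _ ng_3_11_1] lF]) simp_all
  have h_4_5_0: "\<not> (s 4 = s 5 \<and> b 4 = b 5)"
    unfolding s_def b_def by (rule cet_neq0[OF neq_from_ng[OF sc des tl _ _ ng_4_5_0]]) simp_all
  have h_4_5_1: "\<not> (s 4 = s 5 \<and> b 4 \<noteq> b 5)"
    unfolding s_def b_def by (rule cet_neq1[OF neq_from_ng[OF sc des tl _ _ ng_4_5_1] lF]) simp_all
  have h_4_6_0: "\<not> (s 4 = s 6 \<and> b 4 = b 6)"
    unfolding s_def b_def by (rule cet_neq0[OF neq_from_ng[OF sc des tl _ _ ng_4_6_0]]) simp_all
  have h_4_6_1: "\<not> (s 4 = s 6 \<and> b 4 \<noteq> b 6)"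
    unfolding s_def b_def by (rule cet_neq1[OF neq_from_ng[OF sc des tl _ _ ng_4_6_1] lF]) simp_all
  have h_4_8_1: "\<not> (s 4 = s 8 \<and> b 4 \<noteq> b 8)"
    unfolding s_def b_def by (rule cet_neq1[OF neq_from_ng[OF sc des tl _ _ ng_4_8_1] lF]) simp_all
  have h_4_9_0: "\<not> (s 4 = s 9 \<and> b 4 = b 9)"
    unfolding s_def b_def by (rule cet_neq0[OF neq_from_ng[OF sc des tl _ _ ng_4_9_0]]) simp_all
  have h_4_9_1: "\<not> (s 4 = s 9 \<and> b 4 \<noteq> b 9)"
    unfolding s_def b_def by (rule cet_neq1[OF neq_from_ng[OF sc des tl _ _ ng_4_9_1] lF]) simp_all
  have h_4_10_0: "\<not> (s 4 = s 10 \<and> b 4 = b 10)"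
    unfolding s_def b_def by (rule cet_neq0[OF neq_from_ng[OF sc des tl _ _ ng_4_10_0]]) simp_all
  have h_4_11_0: "\<not> (s 4 = s 11 \<and> b 4 = b 11)"
    unfolding s_def b_def by (rule cet_neq0[OF neq_from_ng[OF sc des tl _ _ ng_4_11_0]]) simp_all
  have h_4_11_1: "\<not> (s 4 = s 11 \<and> b 4 \<noteq> b 11)"
    unfolding s_def b_def by (rule cet_neq1[OF neq_from_ng[OF sc des tl _ _ ng_4_11_1] lF]) simp_all
  have h_5_7_0: "\<not> (s 5 = s 7 \<and> b 5 = b 7)"
    unfolding s_def b_def by (rule cet_neq0[OF neq_from_ng[OF sc des tl _ _ ng_5_7_0]]) simp_all
  have h_5_7_1: "\<not> (s 5 = s 7 \<and> b 5 \<noteq> b 7)"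
    unfolding s_def b_def by (rule cet_neq1[OF neq_from_ng[OF sc des tl _ _ ng_5_7_1] lF]) simp_all
  have h_5_8_0: "\<not> (s 5 = s 8 \<and> b 5 = b 8)"
    unfolding s_def b_def by (rule cet_neq0[OF neq_from_ng[OF sc des tl _ _ ng_5_8_0]]) simp_all
  have h_5_8_1: "\<not> (s 5 = s 8 \<and> b 5 \<noteq> b 8)"
    unfolding s_def b_def by (rule cet_neq1[OF neq_from_ng[OF sc des tl _ _ ng_5_8_1] lF]) simp_all
  have h_5_9_1: "\<not> (s 5 = s 9 \<and> b 5 \<noteq> b 9)"
    unfolding s_def b_def by (rule cet_neq1[OF neq_from_ng[OF sc des tl _ _ ng_5_9_1] lF]) simp_all
  have h_5_10_0: "\<not> (s 5 = s 10 \<and> b 5 = b 10)"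
    unfolding s_def b_def by (rule cet_neq0[OF neq_from_ng[OF sc des tl _ _ ng_5_10_0]]) simp_all
  have h_5_10_1: "\<not> (s 5 = s 10 \<and> b 5 \<noteq> b 10)"
    unfolding s_def b_def by (rule cet_neq1[OF neq_from_ng[OF sc des tl _ _ ng_5_10_1] lF]) simp_all
  have h_5_11_0: "\<not> (s 5 = s 11 \<and> b 5 = b 11)"
    unfolding s_def b_def by (rule cet_neq0[OF neq_from_ng[OF sc des tl _ _ ng_5_11_0]]) simp_all
  have h_6_7_0: "\<not> (s 6 = s 7 \<and> b 6 = b 7)"
    unfolding s_def b_def by (rule cet_neq0[OF neq_from_ng[OF sc des tl _ _ ng_6_7_0]]) simp_all
  have h_6_7_1: "\<not> (s 6 = s 7 \<and> b 6 \<noteq> b 7)"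
    unfolding s_def b_def by (rule cet_neq1[OF neq_from_ng[OF sc des tl _ _ ng_6_7_1] lF]) simp_all
  have h_6_8_0: "\<not> (s 6 = s 8 \<and> b 6 = b 8)"
    unfolding s_def b_def by (rule cet_neq0[OF neq_from_ng[OF sc des tl _ _ ng_6_8_0]]) simp_all
  have h_6_9_0: "\<not> (s 6 = s 9 \<and> b 6 = b 9)"
    unfolding s_def b_def by (rule cet_neq0[OF neq_from_ng[OF sc des tl _ _ ng_6_9_0]]) simp_all
  have h_6_9_1: "\<not> (s 6 = s 9 \<and> b 6 \<noteq> b 9)"
    unfolding s_def b_def by (rule cet_neq1[OF neq_from_ng[OF sc des tl _ _ ng_6_9_1] lF]) simp_all
  have h_6_10_1: "\<not> (s 6 = s 10 \<and> b 6 \<noteq> b 10)"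
    unfolding s_def b_def by (rule cet_neq1[OF neq_from_ng[OF sc des tl _ _ ng_6_10_1] lF]) simp_all
  have h_6_11_0: "\<not> (s 6 = s 11 \<and> b 6 = b 11)"
    unfolding s_def b_def by (rule cet_neq0[OF neq_from_ng[OF sc des tl _ _ ng_6_11_0]]) simp_all
  have h_6_11_1: "\<not> (s 6 = s 11 \<and> b 6 \<noteq> b 11)"
    unfolding s_def b_def by (rule cet_neq1[OF neq_from_ng[OF sc des tl _ _ ng_6_11_1] lF]) simp_all
  have h_7_8_0: "\<not> (s 7 = s 8 \<and> b 7 = b 8)"
    unfolding s_def b_def by (rule cet_neq0[OF neq_from_ng[OF sc des tl _ _ ng_7_8_0]]) simp_all
  have h_7_8_1: "\<not> (s 7 = s 8 \<and> b 7 \<noteq> b 8)"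
    unfolding s_def b_def by (rule cet_neq1[OF neq_from_ng[OF sc des tl _ _ ng_7_8_1] lF]) simp_all
  have h_7_9_0: "\<not> (s 7 = s 9 \<and> b 7 = b 9)"
    unfolding s_def b_def by (rule cet_neq0[OF neq_from_ng[OF sc des tl _ _ ng_7_9_0]]) simp_all
  have h_7_10_0: "\<not> (s 7 = s 10 \<and> b 7 = b 10)"
    unfolding s_def b_def by (rule cet_neq0[OF neq_from_ng[OF sc des tl _ _ ng_7_10_0]]) simp_all
  have h_7_10_1: "\<not> (s 7 = s 10 \<and> b 7 \<noteq> b 10)"
    unfolding s_def b_def by (rule cet_neq1[OF neq_from_ng[OF sc des tl _ _ ng_7_10_1] lF]) simp_all
  have h_7_11_1: "\<not> (s 7 = s 11 \<and> b 7 \<noteq> b 11)"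
    unfolding s_def b_def by (rule cet_neq1[OF neq_from_ng[OF sc des tl _ _ ng_7_11_1] lF]) simp_all
  have h_8_9_0: "\<not> (s 8 = s 9 \<and> b 8 = b 9)"
    unfolding s_def b_def by (rule cet_neq0[OF neq_from_ng[OF sc des tl _ _ ng_8_9_0]]) simp_all
  have h_8_9_1: "\<not> (s 8 = s 9 \<and> b 8 \<noteq> b 9)"
    unfolding s_def b_def by (rule cet_neq1[OF neq_from_ng[OF sc des tl _ _ ng_8_9_1] lF]) simp_all
  have h_8_10_0: "\<not> (s 8 = s 10 \<and> b 8 = b 10)"
    unfolding s_def b_def by (rule cet_neq0[OF neq_from_ng[OF sc des tl _ _ ng_8_10_0]]) simp_all
  have h_8_10_1: "\<not> (s 8 = s 10 \<and> b 8 \<noteq> b 10)"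
    unfolding s_def b_def by (rule cet_neq1[OF neq_from_ng[OF sc des tl _ _ ng_8_10_1] lF]) simp_all
  have h_9_11_0: "\<not> (s 9 = s 11 \<and> b 9 = b 11)"
    unfolding s_def b_def by (rule cet_neq0[OF neq_from_ng[OF sc des tl _ _ ng_9_11_0]]) simp_all
  have h_9_11_1: "\<not> (s 9 = s 11 \<and> b 9 \<noteq> b 11)"
    unfolding s_def b_def by (rule cet_neq1[OF neq_from_ng[OF sc des tl _ _ ng_9_11_1] lF]) simp_all
  have h_10_11_0: "\<not> (s 10 = s 11 \<and> b 10 = b 11)"
    unfolding s_def b_def by (rule cet_neq0[OF neq_from_ng[OF sc des tl _ _ ng_10_11_0]]) simp_all
  have h_10_11_1: "\<not> (s 10 = s 11 \<and> b 10 \<noteq> b 11)"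
    unfolding s_def b_def by (rule cet_neq1[OF neq_from_ng[OF sc des tl _ _ ng_10_11_1] lF]) simp_all
  have S4sub: "{s 0, s 1, s 6, s 7} \<subseteq> sigma_of P" using symin unfolding s_def by simp
  have d: "s 0 \<noteq> s 1" "s 0 \<noteq> s 6" "s 0 \<noteq> s 7" "s 1 \<noteq> s 6" "s 1 \<noteq> s 7" "s 6 \<noteq> s 7"
    using h_0_1_0 h_0_1_1 h_0_6_0 h_0_6_1 h_0_7_0 h_0_7_1 h_1_6_0 h_1_6_1 h_1_7_0 h_1_7_1 h_6_7_0 h_6_7_1 by blast+
  have card4: "card {s 0, s 1, s 6, s 7} = 4" using d by simp
  have eqS: "{s 0, s 1, s 6, s 7} = sigma_of P"
    by (rule card_seteq[OF finS S4sub]) (use c4 card4 in simp)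
  have mem: "s e = s 0 \<or> s e = s 1 \<or> s e = s 6 \<or> s e = s 7" if "e \<in> {0..<12}" for e
  proof -
    have "s e \<in> sigma_of P" using symin[OF that] unfolding s_def .
    then show ?thesis unfolding eqS[symmetric] by simp
  qed
  have m_2: "s 2 = s 0 \<or> s 2 = s 1 \<or> s 2 = s 6 \<or> s 2 = s 7" by (rule mem) simp
  have m_3: "s 3 = s 0 \<or> s 3 = s 1 \<or> s 3 = s 6 \<or> s 3 = s 7" by (rule mem) simp
  have m_4: "s 4 = s 0 \<or> s 4 = s 1 \<or> s 4 = s 6 \<or> s 4 = s 7" by (rule mem) simp
  have m_5: "s 5 = s 0 \<or> s 5 = s 1 \<or> s 5 = s 6 \<or> s 5 = s 7" by (rule mem) simp
  have m_8: "s 8 = s 0 \<or> s 8 = s 1 \<or> s 8 = s 6 \<or> s 8 = s 7" by (rule mem) simp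
  have m_9: "s 9 = s 0 \<or> s 9 = s 1 \<or> s 9 = s 6 \<or> s 9 = s 7" by (rule mem) simp
  have m_10: "s 10 = s 0 \<or> s 10 = s 1 \<or> s 10 = s 6 \<or> s 10 = s 7" by (rule mem) simp
  have m_11: "s 11 = s 0 \<or> s 11 = s 1 \<or> s 11 = s 6 \<or> s 11 = s 7" by (rule mem) simp
  have EO: "(s 1 = s 5 \<and> s 5 = s 11 \<and> b 1 = b 5 \<and> b 11 \<noteq> b 1 \<and> s 2 = s 7 \<and> s 7 = s 9 \<and> b 2 = b 9 \<and> b 7 \<noteq> b 2 \<and> s 3 = s 6 \<and> s 6 = s 10 \<and> b 6 = b 10 \<and> b 3 \<noteq> b 6) \<or> (s 0 = s 5 \<and> s 5 = s 9 \<and> b 5 = b 9 \<and> b 0 \<noteq> b 5 \<and> s 1 = s 4 \<and> s 4 = s 10 \<and> b 1 = b 10 \<and> b 4 \<noteq> b 1 \<and> s 2 = s 6 \<and> s 6 = s 8 \<and> b 2 = b 6 \<and> b 8 \<noteq> b 2)" by (rule comb[OF h_0_1_0 h_0_1_1 h_0_2_0 h_0_2_1 h_0_4_1 h_0_5_0 h_0_6_0 h_0_6_1 h_0_7_0 h_0_7_1 h_0_8_1 h_0_9_0 h_0_10_0 h_0_10_1 h_0_11_0 h_0_11_1 h_1_3_0 h_1_3_1 h_1_4_0 h_1_5_1 h_1_6_0 h_1_6_1 h_1_7_0 h_1_7_1 h_1_8_0 h_1_8_1 h_1_9_0 h_1_9_1 h_1_10_1 h_1_11_0 h_2_3_0 h_2_3_1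 h_2_4_0 h_2_4_1 h_2_5_0 h_2_5_1 h_2_6_1 h_2_7_0 h_2_8_0 h_2_9_1 h_2_10_0 h_2_10_1 h_2_11_0 h_2_11_1 h_3_4_0 h_3_4_1 h_3_5_0 h_3_5_1 h_3_6_0 h_3_7_1 h_3_8_0 h_3_8_1 h_3_9_0 h_3_9_1 h_3_10_0 h_3_11_1 h_4_5_0 h_4_5_1 h_4_6_0 h_4_6_1 h_4_8_1 h_4_9_0 h_4_9_1 h_4_10_0 h_4_11_0 h_4_11_1 h_5_7_0 h_5_7_1 h_5_8_0 h_5_8_1 h_5_9_1 h_5_10_0 h_5_10_1 h_5_11_0 h_6_7_0 h_6_7_1 h_6_8_0 h_6_9_0 h_6_9_1 h_6_10_1 h_6_11_0 h_6_11_1 h_7_8_0 h_7_8_1 h_7_9_0 h_7_10_0 h_7_10_1 h_7_11_1 h_8_9_0 h_8_9_1 h_8_10_0 h_8_10_1 h_9_11_0 h_9_11_1 h_10_11_0 h_10_11_1 m_2 m_3 m_4 m_5 m_8 m_9 m_10 m_11])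
  have K6: "False" if "{#x0,x0,x0#} \<in> P" "{#x1,x1,x1#} \<in> P" "{#x2,x2,x2#} \<in> P" "{#hatc x0,hatc x1,hatc x2#} \<in> P" for x0 x1 x2
  proof -
    have "card (verts K33) \<ge> card (verts Q3)" using minv K33_real[OF that] by blast
    then show False using K33_real(3)[OF that] by (simp add: Q3_simps)
  qed
  have tP: "tile_at Q3 lam v \<in> P" if "v < 8" for v using tl that by simp
  have lFs: "lam 0 False = hatc (lam 0 True)" "lam 1 False = hatc (lam 1 True)" "lam 2 False = hatc (lam 2 True)"
    "lam 3 False = hatc (lam 3 True)" "lam 4 False = hatc (lam 4 True)" "lam 5 False = hatc (lam 5 True)"
    "lam 6 False = hatc (lam 6 True)" "lam 7 False = hatc (lam 7 True)" "lam 8 False = hatc (lam 8 True)"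
    "lam 9 False = hatc (lam 9 True)" "lam 10 False = hatc (lam 10 True)" "lam 11 False = hatc (lam 11 True)"
    by (simp_all add: lF)
  from EO show False
  proof (elim disjE)
    assume E: "s 1 = s 5 \<and> s 5 = s 11 \<and> b 1 = b 5 \<and> b 11 \<noteq> b 1 \<and> s 2 = s 7 \<and> s 7 = s 9 \<and> b 2 = b 9 \<and> b 7 \<noteq> b 2 \<and> s 3 = s 6 \<and> s 6 = s 10 \<and> b 6 = b 10 \<and> b 3 \<noteq> b 6"
    have a1: "lam 5 True = lam 1 True" by (rule cet_eq0) (use E in \<open>simp_all add: s_def b_def\<close>)
    have a2: "lam 11 True = hatc (lam 1 True)" by (rule cet_eq1) (use E in \<open>simp_all add: s_def b_def\<close>)
    have a3: "lam 9 True = lam 2 True" by (rule cet_eq0) (use E in \<open>simp_all add: s_def b_def\<close>)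
    have a4: "lam 7 True = hatc (lam 2 True)" by (rule cet_eq1) (use E in \<open>simp_all add: s_def b_def\<close>)
    have a5: "lam 10 True = lam 6 True" by (rule cet_eq0) (use E in \<open>simp_all add: s_def b_def\<close>)
    have a6: "lam 3 True = hatc (lam 6 True)" by (rule cet_eq1) (use E in \<open>simp_all add: s_def b_def\<close>)
    show False
    proof (rule K6)
      show "{#hatc (lam 1 True), hatc (lam 1 True), hatc (lam 1 True)#} \<in> P"
        using tP[of 3] by (simp add: Q3_tiles[unfolded One_nat_def] lFs[unfolded One_nat_def] a1 a2)
      show "{#hatc (lam 2 True), hatc (lam 2 True), hatc (lam 2 True)#} \<in> P"
        using tP[of 5] by (simp add: Q3_tiles[unfolded One_nat_def] lFs[unfolded One_nat_def] a3 a4)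
      show "{#hatc (lam 6 True), hatc (lam 6 True), hatc (lam 6 True)#} \<in> P"
        using tP[of 6] by (simp add: Q3_tiles[unfolded One_nat_def] lFs[unfolded One_nat_def] a5 a6)
      show "{#hatc (hatc (lam 1 True)), hatc (hatc (lam 2 True)), hatc (hatc (lam 6 True))#} \<in> P"
        using tP[of 7] by (simp add: Q3_tiles[unfolded One_nat_def] lFs[unfolded One_nat_def] a2 a4 a6 add_mset_commute)
    qed
  next
    assume O: "s 0 = s 5 \<and> s 5 = s 9 \<and> b 5 = b 9 \<and> b 0 \<noteq> b 5 \<and> s 1 = s 4 \<and> s 4 = s 10 \<and> b 1 = b 10 \<and> b 4 \<noteq> b 1 \<and> s 2 = s 6 \<and> s 6 = s 8 \<and> b 2 = b 6 \<and> b 8 \<noteq> b 2"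
    have a1: "lam 9 True = lam 5 True" by (rule cet_eq0) (use O in \<open>simp_all add: s_def b_def\<close>)
    have a2: "lam 0 True = hatc (lam 5 True)" by (rule cet_eq1) (use O in \<open>simp_all add: s_def b_def\<close>)
    have a3: "lam 10 True = lam 1 True" by (rule cet_eq0) (use O in \<open>simp_all add: s_def b_def\<close>)
    have a4: "lam 4 True = hatc (lam 1 True)" by (rule cet_eq1) (use O in \<open>simp_all add: s_def b_def\<close>)
    have a5: "lam 6 True = lam 2 True" by (rule cet_eq0) (use O in \<open>simp_all add: s_def b_def\<close>)
    have a6: "lam 8 True = hatc (lam 2 True)" by (rule cet_eq1) (use O in \<open>simp_all add: s_def b_def\<close>)
    show False
    proof (rule K6)
      show "{#lam 5 True, lam 5 True, lam 5 True#} \<in> P"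
        using tP[of 1] by (simp add: Q3_tiles[unfolded One_nat_def] lFs[unfolded One_nat_def] a1 a2)
      show "{#lam 1 True, lam 1 True, lam 1 True#} \<in> P"
        using tP[of 2] by (simp add: Q3_tiles[unfolded One_nat_def] lFs[unfolded One_nat_def] a3 a4)
      show "{#lam 2 True, lam 2 True, lam 2 True#} \<in> P"
        using tP[of 4] by (simp add: Q3_tiles[unfolded One_nat_def] lFs[unfolded One_nat_def] a5 a6)
      show "{#hatc (lam 5 True), hatc (lam 1 True), hatc (lam 2 True)#} \<in> P"
        using tP[of 0] by (simp add: Q3_tiles[unfolded One_nat_def] lFs[unfolded One_nat_def] a2 a4 a6 add_mset_commute)
    qed
  qed
qed



definition "TA0 = {#Unh 0, Unh 0, Unh 0#}"
definition "TA1 = {#Unh 1, Unh 3, Unh 4#}"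
definition "TA2 = {#Unh 2, Unh 2, Unh 2#}"
definition "TB0 = {#Hat 0, Hat 1, Hat 2#}"
definition "TB1 = {#Hat 2, Hat 4, Hat 4#}"
definition "TB2 = {#Hat 0, Hat 3, Hat 3#}"
definition PU :: "tile set" where "PU = {TA0, TA1, TA2, TB0, TB1, TB2}"

lemmas Tdefs = TA0_def TA1_def TA2_def TB0_def TB1_def TB2_def

lemma T_distinct:
  "TA0 \<noteq> TA1" "TA0 \<noteq> TA2" "TA0 \<noteq> TB0" "TA0 \<noteq> TB1" "TA0 \<noteq> TB2"
  "TA1 \<noteq> TA2" "TA1 \<noteq> TB0" "TA1 \<noteq> TB1" "TA1 \<noteq> TB2"
  "TA2 \<noteq> TB0" "TA2 \<noteq> TB1" "TA2 \<noteq> TB2"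
  "TB0 \<noteq> TB1" "TB0 \<noteq> TB2" "TB1 \<noteq> TB2"
  by (simp_all add: Tdefs add_eq_conv_ex)

lemma PU_size: "t \<in> PU \<Longrightarrow> size t = 3"
  unfolding PU_def by (auto simp: Tdefs)

lemma PU_unh: "t \<in> PU \<Longrightarrow> Unh a \<in># t \<Longrightarrow> (t = TA0 \<and> a = 0) \<or> (t = TA1 \<and> (a = 1 \<or> a = 3 \<or> a = 4)) \<or> (t = TA2 \<and> a = 2)"
  unfolding PU_def by (auto simp: Tdefs)

lemma PU_hat: "t \<in> PU \<Longrightarrow> Hat a \<in># t \<Longrightarrow> (t = TB0 \<and> (a = 0 \<or> a = 1 \<or> a = 2)) \<or> (t = TB1 \<and> (a = 2 \<or> a = 4)) \<or> (t = TB2 \<and> (a = 0 \<or> a = 3))"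
  unfolding PU_def by (auto simp: Tdefs)

lemma PU_nodouble:
  assumes "t \<in> PU" "s \<in> PU" "{#Unh a, Unh a'#} \<subseteq># t" "{#Hat a, Hat a'#} \<subseteq># s"
  shows False
proof -
  have c1: "count {#Unh a, Unh a'#} x \<le> count t x" for x using mset_subset_eq_count[OF assms(3)] .
  have c2: "count {#Hat a, Hat a'#} x \<le> count s x" for x using mset_subset_eq_count[OF assms(4)] .
  have "Unh a \<in># t" "Unh a' \<in># t" "Hat a \<in># s" "Hat a' \<in># s"
    using assms(3,4) by (auto dest: mset_subset_eqD)
  then have A: "(t = TA0 \<and> a = 0) \<or> (t = TA1 \<and> (a = 1 \<or> a = 3 \<or> a = 4)) \<or> (t = TA2 \<and> a = 2)"
     and A': "(t = TA0 \<and> a' = 0) \<or> (t = TA1 \<and> (a' = 1 \<or> a' = 3 \<or> a' = 4)) \<or> (t = TA2 \<and> a' = 2)"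
     and B: "(s = TB0 \<and> (a = 0 \<or> a = 1 \<or> a = 2)) \<or> (s = TB1 \<and> (a = 2 \<or> a = 4)) \<or> (s = TB2 \<and> (a = 0 \<or> a = 3))"
     and B': "(s = TB0 \<and> (a' = 0 \<or> a' = 1 \<or> a' = 2)) \<or> (s = TB1 \<and> (a' = 2 \<or> a' = 4)) \<or> (s = TB2 \<and> (a' = 0 \<or> a' = 3))"
    using PU_unh PU_hat assms(1,2) by blast+
  show False
  proof (cases "a = a'")
    case True
    then have "2 \<le> count t (Unh a)" "2 \<le> count s (Hat a)" using c1[of "Unh a"] c2[of "Hat a"] by simp_all
    then show False using A B True T_distinct by (auto simp: Tdefs)
  next
    case False
    then show False using A A' B B' T_distinct by auto
  qed
qed

lemma sum_by_tile:
  assumes "finite V" "\<forall>v\<in>V. tau v \<in> PU"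
  shows "(\<Sum>v\<in>V. (h (tau v) :: nat)) = (\<Sum>t\<in>PU. card {v\<in>V. tau v = t} * h t)"
proof -
  have "(\<Sum>v\<in>V. h (tau v)) = (\<Sum>t\<in>PU. \<Sum>v\<in>{v\<in>V. tau v = t}. h (tau v))"
    by (rule sum.group[symmetric]) (use assms in \<open>auto simp: PU_def\<close>)
  also have "\<dots> = (\<Sum>t\<in>PU. card {v\<in>V. tau v = t} * h t)"
    by (rule sum.cong) auto
  finally show ?thesis .
qed

lemma sum_PU: "(\<Sum>t\<in>PU. (g t :: nat)) = g TA0 + g TA1 + g TA2 + g TB0 + g TB1 + g TB2"
  unfolding PU_def using T_distinct by (simp add: add.assoc)

lemma up_counts:
  assumes wf: "wf_graph H" and des: "assembly_design H lam" and tl: "\<forall>v\<in>verts H. tile_at H lam v \<in> PU"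
  shows "card (verts H) = 8 * card {v\<in>verts H. tile_at H lam v = TB1}"
    and "card {v\<in>verts H. tile_at H lam v = TA0} = card {v\<in>verts H. tile_at H lam v = TB1}"
    and "card {v\<in>verts H. tile_at H lam v = TA1} = 2 * card {v\<in>verts H. tile_at H lam v = TB1}"
    and "card {v\<in>verts H. tile_at H lam v = TA2} = card {v\<in>verts H. tile_at H lam v = TB1}"
    and "card {v\<in>verts H. tile_at H lam v = TB0} = 2 * card {v\<in>verts H. tile_at H lam v = TB1}"
    and "card {v\<in>verts H. tile_at H lam v = TB2} = card {v\<in>verts H. tile_at H lam v = TB1}"
proof -
  define n where "n t = card {v\<in>verts H. tile_at H lam v = t}" for t
  have fin: "finite (verts H)" using wf unfolding wf_graph_def by blast
  have bal: "(\<Sum>t\<in>PU. n t * count t (Unh a)) = (\<Sum>t\<in>PU. n t * count t (Hat a))" for a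
    using balance[OF wf des, of a] sum_by_tile[OF fin tl, of "\<lambda>t. count t (Unh a)"]
      sum_by_tile[OF fin tl, of "\<lambda>t. count t (Hat a)"] unfolding n_def by simp
  have e0: "3 * n TA0 = n TB0 + n TB2" using bal[of 0] unfolding sum_PU by (simp add: Tdefs)
  have e1: "n TA1 = n TB0" using bal[of 1] unfolding sum_PU by (simp add: Tdefs)
  have e2: "3 * n TA2 = n TB0 + n TB1" using bal[of 2] unfolding sum_PU by (simp add: Tdefs)
  have e3: "n TA1 = 2 * n TB2" using bal[of 3] unfolding sum_PU by (simp add: Tdefs)
  have e4: "n TA1 = 2 * n TB1" using bal[of 4] unfolding sum_PU by (simp add: Tdefs)
  have cV: "card (verts H) = n TA0 + n TA1 + n TA2 + n TB0 + n TB1 + n TB2"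
    using sum_by_tile[OF fin tl, of "\<lambda>t. 1"] unfolding sum_PU n_def by simp
  show "card (verts H) = 8 * card {v\<in>verts H. tile_at H lam v = TB1}"
    "card {v\<in>verts H. tile_at H lam v = TA0} = card {v\<in>verts H. tile_at H lam v = TB1}"
    "card {v\<in>verts H. tile_at H lam v = TA1} = 2 * card {v\<in>verts H. tile_at H lam v = TB1}"
    "card {v\<in>verts H. tile_at H lam v = TA2} = card {v\<in>verts H. tile_at H lam v = TB1}"
    "card {v\<in>verts H. tile_at H lam v = TB0} = 2 * card {v\<in>verts H. tile_at H lam v = TB1}"
    "card {v\<in>verts H. tile_at H lam v = TB2} = card {v\<in>verts H. tile_at H lam v = TB1}"
    using e0 e1 e2 e3 e4 cV unfolding n_def by linarith+
qed

lemma up_edges: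
  assumes wf: "wf_graph H" and tl: "\<forall>v\<in>verts H. tile_at H lam v \<in> PU"
  shows "2 * card (edges H) = 3 * card (verts H)"
proof -
  have "(\<Sum>v\<in>verts H. size (tile_at H lam v)) = (\<Sum>v\<in>verts H. 3)"
    using tl PU_size by (intro sum.cong) auto
  then show ?thesis using size_sum[OF wf, of lam] by simp
qed

definition Qpairs :: "(nat \<times> nat) set" where
  "Qpairs = {(0,2),(0,4),(0,1),(3,2),(5,4),(3,1),(5,1),(3,7),(5,7),(6,2),(6,4),(6,7)}"

lemma Qpairs_edge: "(a,c) \<in> Qpairs \<Longrightarrow> \<exists>i\<in>{0..<12}. {endp Q3 i True, endp Q3 i False} = {a,c}"
  unfolding Qpairs_def
  apply (elim insertE)
  apply (rule bexI[of _ 4], simp add: Q3_def q3_edge_list_def, simp)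
  apply (rule bexI[of _ 8], simp add: Q3_def q3_edge_list_def, simp)
  apply (rule bexI[of _ 0], simp add: Q3_def q3_edge_list_def, simp)
  apply (rule bexI[of _ 1], simp add: Q3_def q3_edge_list_def insert_commute, simp)
  apply (rule bexI[of _ 2], simp add: Q3_def q3_edge_list_def insert_commute, simp)
  apply (rule bexI[of _ 5], simp add: Q3_def q3_edge_list_def insert_commute, simp)
  apply (rule bexI[of _ 9], simp add: Q3_def q3_edge_list_def insert_commute, simp)
  apply (rule bexI[of _ 11], simp add: Q3_def q3_edge_list_def insert_commute, simp)
  apply (rule bexI[of _ 7], simp add: Q3_def q3_edge_list_def insert_commute, simp)
  apply (rule bexI[of _ 10], simp add: Q3_def q3_edge_list_def insert_commute, simp)
  apply (rule bexI[of _ 6], simp add: Q3_def q3_edge_list_def insert_commute, simp)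
  apply (rule bexI[of _ 3], simp add: Q3_def q3_edge_list_def insert_commute, simp)
  apply simp
  done



lemma lab_other: "assembly_design H lam \<Longrightarrow> e \<in> edges H \<Longrightarrow> lam e (\<not> b) = hatc (lam e b)"
  unfolding assembly_design_def by (cases b) auto

lemma unh_side: "assembly_design H lam \<Longrightarrow> e \<in> edges H \<Longrightarrow> \<exists>b a. lam e b = Unh a"
  unfolding assembly_design_def by (cases "lam e True") (auto intro: exI[of _ True] exI[of _ False])

definition isA :: "tile \<Rightarrow> bool" where "isA t \<longleftrightarrow> t = TA0 \<or> t = TA1 \<or> t = TA2"

lemma PU_unh_A: "t \<in> PU \<Longrightarrow> Unh a \<in># t \<Longrightarrow> isA t"
  using PU_unh unfolding isA_def by blast
lemma PU_hat_A: "t \<in> PU \<Longrightarrow> Hat a \<in># t \<Longrightarrow> \<not> isA t"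
  using PU_hat T_distinct unfolding isA_def by metis

lemma card1E: "card S = 1 \<Longrightarrow> \<exists>x. S = {x}" using card_1_singletonE by blast

lemma up_iso:
  assumes wf: "wf_graph H" and des: "assembly_design H lam" and tl: "\<forall>v\<in>verts H. tile_at H lam v \<in> PU"
    and c8: "card (verts H) = 8"
  shows "graph_iso H Q3"
proof -
  define \<tau> where "\<tau> v = tile_at H lam v" for v
  have tlP: "v \<in> verts H \<Longrightarrow> \<tau> v \<in> PU" for v using tl \<tau>_def by simp
  have finE: "finite (edges H)" using wf unfolding wf_graph_def by blast
  have ends: "e \<in> edges H \<Longrightarrow> endp H e b \<in> verts H" for e b using wf unfolding wf_graph_def by blast
  have mem: "e \<in> edges H \<Longrightarrow> lam e b \<in># \<tau> (endp H e b)" for e b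
    unfolding \<tau>_def by (rule tile_mem[OF finE]) auto
  note cnt = up_counts[OF wf des tl]
  have n1: "card {v\<in>verts H. \<tau> v = TB1} = 1" using cnt(1) c8 unfolding \<tau>_def by simp
  obtain x0 where cx0: "{v\<in>verts H. \<tau> v = TA0} = {x0}" using card1E cnt(2) n1 unfolding \<tau>_def by metis
  obtain z where cz: "{v\<in>verts H. \<tau> v = TA2} = {z}" using card1E cnt(4) n1 unfolding \<tau>_def by metis
  obtain q where cq: "{v\<in>verts H. \<tau> v = TB1} = {q}" using card1E n1 by metis
  obtain r where cr: "{v\<in>verts H. \<tau> v = TB2} = {r}" using card1E cnt(6) n1 unfolding \<tau>_def by metis
  have "card {v\<in>verts H. \<tau> v = TA1} = 2" using cnt(3) n1 unfolding \<tau>_def by simp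
  then obtain y1 y2 where cy: "{v\<in>verts H. \<tau> v = TA1} = {y1,y2}" and y12: "y1 \<noteq> y2"
    unfolding card_2_iff by blast
  have "card {v\<in>verts H. \<tau> v = TB0} = 2" using cnt(5) n1 unfolding \<tau>_def by simp
  then obtain p1' p2' where cp': "{v\<in>verts H. \<tau> v = TB0} = {p1',p2'}" and p12': "p1' \<noteq> p2'"
    unfolding card_2_iff by blast
  have ty1: "\<tau> y1 = TA1" using cy by blast
  have "Unh 1 \<in># \<tau> y1" by (simp add: ty1 TA1_def)
  then obtain e1 b1 where e1: "e1 \<in> edges H" "endp H e1 b1 = y1" "lam e1 b1 = Unh 1"
    using tile_ex[OF finE] unfolding \<tau>_def by blast
  define w where "w = endp H e1 (\<not> b1)"
  have wV: "w \<in> verts H" unfolding w_def using ends e1(1) .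
  have "Hat 1 \<in># \<tau> w" unfolding w_def using mem[OF e1(1), of "\<not> b1"] lab_other[OF des e1(1), of b1] e1(3) by simp
  then have "\<tau> w = TB0" using PU_hat[OF tlP[OF wV], of 1] by auto
  then have "w \<in> {p1',p2'}" using wV cp' by blast
  then obtain p1 p2 where cp: "{v\<in>verts H. \<tau> v = TB0} = {p1,p2}" and p12: "p1 \<noteq> p2" and wp: "w = p1"
    using cp' p12' by (metis insert_commute insertE singletonD)
  have tiles: "\<tau> x0 = TA0" "\<tau> y1 = TA1" "\<tau> y2 = TA1" "\<tau> z = TA2" "\<tau> p1 = TB0" "\<tau> p2 = TB0" "\<tau> q = TB1" "\<tau> r = TB2"
    using cx0 cy cz cp cq cr by blast+
  have inV: "x0 \<in> verts H" "y1 \<in> verts H" "y2 \<in> verts H" "z \<in> verts H" "p1 \<in> verts H" "p2 \<in> verts H" "q \<in> verts H" "r \<in> verts H"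
    using cx0 cy cz cp cq cr by blast+
  have dist: "distinct [x0,r,p1,y1,p2,y2,z,q]"
    using tiles T_distinct y12 p12 by auto
  have Veq: "verts H = {x0,r,p1,y1,p2,y2,z,q}"
  proof
    show "verts H \<subseteq> {x0,r,p1,y1,p2,y2,z,q}"
    proof
      fix v assume v: "v \<in> verts H"
      have "\<tau> v \<in> PU" using tlP[OF v] .
      then show "v \<in> {x0,r,p1,y1,p2,y2,z,q}" unfolding PU_def
        using v cx0 cy cz cp cq cr by blast
    qed
    show "{x0,r,p1,y1,p2,y2,z,q} \<subseteq> verts H" using inV by simp
  qed
  define f where "f v = (if v = x0 then 0 else if v = r then 1 else if v = p1 then 2 else if v = y1 then 3
     else if v = p2 then 4 else if v = y2 then 5 else if v = z then 6 else (7::nat))" for v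
  have fv: "f x0 = 0" "f r = 1" "f p1 = 2" "f y1 = 3" "f p2 = 4" "f y2 = 5" "f z = 6" "f q = 7"
    using dist unfolding f_def by auto
  have finj: "inj_on f (verts H)" unfolding Veq using dist by (simp add: fv)
  have fbij: "bij_betw f (verts H) {0..<8}"
  proof -
    have "f ` verts H \<subseteq> {0..<8}" unfolding f_def by auto
    moreover have "card (f ` verts H) = card {0..<8::nat}" using card_image[OF finj] c8 by simp
    ultimately have "f ` verts H = {0..<8}" by (intro card_subset_eq) auto
    then show ?thesis using finj unfolding bij_betw_def by blast
  qed
  have classes: "\<And>v. v \<in> verts H \<Longrightarrow> \<tau> v = TA0 \<Longrightarrow> v = x0"
     "\<And>v. v \<in> verts H \<Longrightarrow> \<tau> v = TA1 \<Longrightarrow> v = y1 \<or> v = y2"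
     "\<And>v. v \<in> verts H \<Longrightarrow> \<tau> v = TA2 \<Longrightarrow> v = z"
     "\<And>v. v \<in> verts H \<Longrightarrow> \<tau> v = TB0 \<Longrightarrow> v = p1 \<or> v = p2"
     "\<And>v. v \<in> verts H \<Longrightarrow> \<tau> v = TB1 \<Longrightarrow> v = q"
     "\<And>v. v \<in> verts H \<Longrightarrow> \<tau> v = TB2 \<Longrightarrow> v = r"
    subgoal for v using cx0 by blast
    subgoal for v using cy by blast
    subgoal for v using cz by blast
    subgoal for v using cp by blast
    subgoal for v using cq by blast
    subgoal for v using cr by blast
    done
  have KC: "(f (endp H e b), f (endp H e (\<not> b))) \<in> Qpairs" if e: "e \<in> edges H" and la: "lam e b = Unh a" for e b a
  proof -
    define u where "u = endp H e b"
    define v where "v = endp H e (\<not> b)"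
    have uV: "u \<in> verts H" and vV: "v \<in> verts H" unfolding u_def v_def using ends e by auto
    have mu: "Unh a \<in># \<tau> u" using mem[OF e, of b] la unfolding u_def by simp
    have mv: "Hat a \<in># \<tau> v" using mem[OF e, of "\<not> b"] lab_other[OF des e, of b] la unfolding v_def by simp
    have U: "(\<tau> u = TA0 \<and> a = 0) \<or> (\<tau> u = TA1 \<and> (a = 1 \<or> a = 3 \<or> a = 4)) \<or> (\<tau> u = TA2 \<and> a = 2)"
      using PU_unh[OF tlP[OF uV] mu] .
    have W: "(\<tau> v = TB0 \<and> (a = 0 \<or> a = 1 \<or> a = 2)) \<or> (\<tau> v = TB1 \<and> (a = 2 \<or> a = 4)) \<or> (\<tau> v = TB2 \<and> (a = 0 \<or> a = 3))"
      using PU_hat[OF tlP[OF vV] mv] .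
    have special: "(u = y1 \<and> v = p1) \<or> (u = y2 \<and> v = p2)" if "u = y1 \<or> u = y2" "v = p1 \<or> v = p2" "a = 1"
    proof -
      have ne1: "\<not> (u = y1 \<and> v = p2)"
      proof
        assume uv: "u = y1 \<and> v = p2"
        have "(e,b) \<noteq> (e1,b1)"
        proof
          assume "(e,b) = (e1,b1)"
          then have "v = w" unfolding v_def w_def by simp
          then show False using uv p12 wp by simp
        qed
        then have "{#lam e b, lam e1 b1#} \<subseteq># tile_at H lam y1"
          using tile_two[OF finE e _ e1(1) e1(2)] uv unfolding u_def by blast
        then have "{#Unh 1, Unh 1#} \<subseteq># TA1" using la e1(3) ty1 \<open>a = 1\<close> unfolding \<tau>_def by simp
        then show False by (simp add: TA1_def)
      qed
      have ne2: "\<not> (u = y2 \<and> v = p1)"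
      proof
        assume uv: "u = y2 \<and> v = p1"
        have "(e,\<not> b) \<noteq> (e1,\<not> b1)"
        proof
          assume "(e,\<not> b) = (e1,\<not> b1)"
          then have "u = y1" using e1(2) unfolding u_def by simp
          then show False using uv y12 by simp
        qed
        moreover have "endp H e1 (\<not> b1) = p1" using wp w_def by simp
        ultimately have "{#lam e (\<not> b), lam e1 (\<not> b1)#} \<subseteq># tile_at H lam p1"
          using tile_two[OF finE e _ e1(1)] uv unfolding v_def by blast
        then have "{#Hat 1, Hat 1#} \<subseteq># TB0"
          using la e1(3) lab_other[OF des e, of b] lab_other[OF des e1(1), of b1] tiles(5) \<open>a = 1\<close> unfolding \<tau>_def by simp
        then show False by (simp add: TB0_def)
      qed
      show ?thesis using that ne1 ne2 by blast
    qed
    have "(f u, f v) \<in> Qpairs"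
    proof -
      from U consider (c0) "\<tau> u = TA0" "a = 0" | (c1) "\<tau> u = TA1" "a = 1" | (c3) "\<tau> u = TA1" "a = 3"
        | (c4) "\<tau> u = TA1" "a = 4" | (c2) "\<tau> u = TA2" "a = 2" by blast
      then show ?thesis
      proof cases
        case c0
        have uu: "u = x0" using classes(1)[OF uV c0(1)] .
        have "\<tau> v = TB0 \<or> \<tau> v = TB2" using W c0(2) by simp
        then have "v = p1 \<or> v = p2 \<or> v = r" using classes(4)[OF vV] classes(6)[OF vV] by blast
        then show ?thesis using uu by (elim disjE; simp add: fv Qpairs_def)
      next
        case c1
        have uu: "u = y1 \<or> u = y2" using classes(2)[OF uV c1(1)] .
        have "\<tau> v = TB0" using W c1(2) by simp
        then have "v = p1 \<or> v = p2" using classes(4)[OF vV] by blast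
        then have "(u = y1 \<and> v = p1) \<or> (u = y2 \<and> v = p2)" using special[OF uu _ c1(2)] by blast
        then show ?thesis by (elim disjE; simp add: fv Qpairs_def)
      next
        case c3
        have uu: "u = y1 \<or> u = y2" using classes(2)[OF uV c3(1)] .
        have "\<tau> v = TB2" using W c3(2) by simp
        then have "v = r" using classes(6)[OF vV] by blast
        then show ?thesis using uu by (elim disjE; simp add: fv Qpairs_def)
      next
        case c4
        have uu: "u = y1 \<or> u = y2" using classes(2)[OF uV c4(1)] .
        have "\<tau> v = TB1" using W c4(2) by simp
        then have "v = q" using classes(5)[OF vV] by blast
        then show ?thesis using uu by (elim disjE; simp add: fv Qpairs_def)
      next
        case c2
        have uu: "u = z" using classes(3)[OF uV c2(1)] .
        have "\<tau> v = TB0 \<or> \<tau> v = TB1" using W c2(2) by simp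
        then have "v = p1 \<or> v = p2 \<or> v = q" using classes(4)[OF vV] classes(5)[OF vV] by blast
        then show ?thesis using uu by (elim disjE; simp add: fv Qpairs_def)
      qed
    qed
    then show ?thesis unfolding u_def v_def .
  qed
  have pairset: "{endp H e b, endp H e (\<not> b)} = {endp H e True, endp H e False}" for e b
    by (cases b) auto
  have gex: "\<exists>i. i \<in> {0..<12} \<and> {endp Q3 i True, endp Q3 i False} = f ` {endp H e True, endp H e False}"
    if e: "e \<in> edges H" for e
  proof -
    obtain b a where la: "lam e b = Unh a" using unh_side[OF des e] by blast
    obtain i where i: "i \<in> {0..<12}" "{endp Q3 i True, endp Q3 i False} = {f (endp H e b), f (endp H e (\<not> b))}"
      using Qpairs_edge[OF KC[OF e la]] by blast
    have "f ` {endp H e True, endp H e False} = {f (endp H e b), f (endp H e (\<not> b))}"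
      by (cases b) (auto simp: insert_commute)
    then show ?thesis using i by auto
  qed
  define g where "g e = (SOME i. i \<in> {0..<12} \<and> {endp Q3 i True, endp Q3 i False} = f ` {endp H e True, endp H e False})" for e
  have gp: "g e \<in> {0..<12} \<and> {endp Q3 (g e) True, endp Q3 (g e) False} = f ` {endp H e True, endp H e False}"
    if e: "e \<in> edges H" for e
    unfolding g_def by (rule someI_ex[OF gex[OF e]])
  have aside: "isA (\<tau> (endp H e b))" "\<not> isA (\<tau> (endp H e (\<not> b)))" if e: "e \<in> edges H" and la: "lam e b = Unh a" for e b a
  proof -
    have "Unh a \<in># \<tau> (endp H e b)" using mem[OF e, of b] la by simp
    then show "isA (\<tau> (endp H e b))" using PU_unh_A tlP ends e by blast
    have "Hat a \<in># \<tau> (endp H e (\<not> b))" using mem[OF e, of "\<not> b"] lab_other[OF des e, of b] la by simp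
    then show "\<not> isA (\<tau> (endp H e (\<not> b)))" using PU_hat_A tlP ends e by blast
  qed
  have SI: "e = e'" if e: "e \<in> edges H" and e': "e' \<in> edges H"
    and eq: "{endp H e True, endp H e False} = {endp H e' True, endp H e' False}" for e e'
  proof (rule ccontr)
    assume ne: "e \<noteq> e'"
    obtain b a where la: "lam e b = Unh a" using unh_side[OF des e] by blast
    obtain b' a' where la': "lam e' b' = Unh a'" using unh_side[OF des e'] by blast
    have eq2: "{endp H e b, endp H e (\<not> b)} = {endp H e' b', endp H e' (\<not> b')}"
      using eq unfolding pairset .
    have A1: "isA (\<tau> (endp H e b))" "\<not> isA (\<tau> (endp H e (\<not> b)))" using aside[OF e la] by auto
    have A2: "isA (\<tau> (endp H e' b'))" "\<not> isA (\<tau> (endp H e' (\<not> b')))" using aside[OF e' la'] by auto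
    have same: "endp H e b = endp H e' b'" "endp H e (\<not> b) = endp H e' (\<not> b')"
      using eq2 A1 A2 by (auto simp: doubleton_eq_iff)
    have t1: "{#lam e b, lam e' b'#} \<subseteq># tile_at H lam (endp H e b)"
      by (rule tile_two[OF finE e refl e' same(1)[symmetric]]) (use ne in simp)
    have t2: "{#lam e (\<not> b), lam e' (\<not> b')#} \<subseteq># tile_at H lam (endp H e (\<not> b))"
      by (rule tile_two[OF finE e refl e' same(2)[symmetric]]) (use ne in simp)
    have t1': "{#Unh a, Unh a'#} \<subseteq># \<tau> (endp H e b)" using t1 la la' unfolding \<tau>_def by simp
    have t2': "{#Hat a, Hat a'#} \<subseteq># \<tau> (endp H e (\<not> b))"
      using t2 la la' lab_other[OF des e, of b] lab_other[OF des e', of b'] unfolding \<tau>_def by simp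
    show False using PU_nodouble[OF tlP[OF ends[OF e]] tlP[OF ends[OF e]] t1' t2'] .
  qed
  have Vsub: "e \<in> edges H \<Longrightarrow> {endp H e True, endp H e False} \<subseteq> verts H" for e using ends by auto
  have ginj: "inj_on g (edges H)"
  proof (rule inj_onI)
    fix e e' assume e: "e \<in> edges H" and e': "e' \<in> edges H" and geq: "g e = g e'"
    have "f ` {endp H e True, endp H e False} = f ` {endp H e' True, endp H e' False}"
      using gp[OF e] gp[OF e'] geq by simp
    then have "{endp H e True, endp H e False} = {endp H e' True, endp H e' False}"
      using inj_on_image_eq_iff[OF finj Vsub[OF e] Vsub[OF e']] by simp
    then show "e = e'" using SI e e' by blast
  qed
  have cE: "card (edges H) = 12" using up_edges[OF wf tl] c8 by simp
  have gbij: "bij_betw g (edges H) {0..<12}"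
  proof -
    have "g ` edges H \<subseteq> {0..<12}" using gp by auto
    moreover have "card (g ` edges H) = card {0..<12::nat}" using card_image[OF ginj] cE by simp
    ultimately have "g ` edges H = {0..<12}" by (intro card_subset_eq) auto
    then show ?thesis using ginj unfolding bij_betw_def by blast
  qed
  show ?thesis unfolding graph_iso_def Q3_simps
    using fbij gbij gp by blast
qed


definition TLQ :: "cet list" where
  "TLQ = [Unh 0, Hat 1, Hat 1, Unh 2, Unh 0, Hat 3, Hat 2, Unh 4, Unh 0, Hat 3, Hat 2, Unh 4]"

definition lamQ :: "nat \<Rightarrow> bool \<Rightarrow> cet" where
  "lamQ e b = (if b then TLQ ! e else hatc (TLQ ! e))"

lemma PU_pot: "is_pot PU"
  unfolding is_pot_def PU_def by (auto simp: Tdefs)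

lemma PU_sigma: "sigma_of PU = {0,1,2,3,4}"
  unfolding sigma_of_def PU_def by (auto simp: Tdefs)

lemma PU_realizes_Q3: "realizes PU Q3"
  unfolding realizes_iff
proof (intro exI conjI)
  show "assembly_design Q3 lamQ" unfolding assembly_design_def lamQ_def by simp
  show "\<forall>v\<in>verts Q3. tile_at Q3 lamQ v \<in> PU"
    unfolding Q3_simps upt8
    by (simp add: Q3_tiles Q3_tiles[unfolded One_nat_def] lamQ_def TLQ_def PU_def Tdefs add_mset_commute)
qed

lemma upper_bound: "realizes_scen3 PU Q3 \<and> card (sigma_of PU) = 5"
proof -
  have cQ: "card (verts Q3) = 8" by (simp add: Q3_simps)
  have min: "card (verts H) \<ge> card (verts Q3)" if H: "wf_graph H" "realizes PU H" for H
  proof -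
    obtain lam where des: "assembly_design H lam" and tl: "\<forall>v\<in>verts H. tile_at H lam v \<in> PU"
      using H(2) unfolding realizes_iff by blast
    have "card (verts H) > 0" using H(1) unfolding wf_graph_def by auto
    then show ?thesis using up_counts(1)[OF H(1) des tl] cQ by simp
  qed
  have iso: "graph_iso H Q3" if H: "wf_graph H" "realizes PU H" "card (verts H) = card (verts Q3)" for H
  proof -
    obtain lam where des: "assembly_design H lam" and tl: "\<forall>v\<in>verts H. tile_at H lam v \<in> PU"
      using H(2) unfolding realizes_iff by blast
    show ?thesis using up_iso[OF H(1) des tl] H(3) cQ by simp
  qed
  show ?thesis unfolding realizes_scen3_def using PU_pot PU_realizes_Q3 min iso PU_sigma by auto
qed

theorem proposition4:
  shows "(\<exists>P. realizes_scen3 P Q3 \<and> card (sigma_of P) = 5) \<and>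
         (\<forall>P. realizes_scen3 P Q3 \<longrightarrow> card (sigma_of P) \<ge> 5)"
  using upper_bound lower_bound by blast

end
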